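(* Let $H_A$ on $\mathcal H_A$ ($\dim d_A$) and $H_B$ on $\mathcal H_B$ ($\dim d_B$) be Hermitian, fix orthonormal bases and integers $1\le d_{A'}\le d_A$, $1\le d_{B'}\le d_B$, and write $$H_A=\begin{pmatrix} J_\parallel & C^\dagger\\ C & J_\perp\end{pmatrix},\qquad H_B=\begin{pmatrix} K_\parallel & D^\dagger\\ D & K_\perp\end{pmatrix},$$ where $J_\parallel$ ($K_\parallel$) is the compression of $H_A$ ($H_B$) to the span of the first $d_{A'}$ ($d_{B'}$) basis vectors. Then $H=H_A\otimes H_B$ can simulate $H'=J_\parallel\otimes K_\parallel$ (acting on systems of dimensions $d_{A'}$, $d_{B'}$) with rate $\gamma_{H'|H}\ge 1$. More generally, if $H=\sum_i J_i\otimes K_i$, the same holds for $H'=\sum_i J_{i\parallel}\otimes K_{i\parallel}$.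
   Context: All Hamiltonians are Hermitian operators on finite-dimensional Hilbert spaces. A bipartite Hamiltonian acts on $\mathcal H_A\otimes\mathcal H_B$, with system $A$ held by Alice and $B$ by Bob; it is local if it has the form $H_A\otimes I_B+I_A\otimes H_B$ and nonlocal otherwise. Simulation model: given a bipartite Hamiltonian $H$, Alice and Bob may attach or discard local ancillary systems of arbitrary finite dimension (on which $H$ acts trivially), apply arbitrary instantaneous local unitaries $U_A\otimes U_B$ (each acting on that party's system together with their ancillas), and switch $H$ on for chosen time intervals; the goal is to track (stroboscopically, for arbitrarily finely spaced times) the evolution $e^{-iH't}$ of a target bipartite Hamiltonian $H'$. The simulation rate $\gamma_{H'|H}$ is the supremum of $\gamma\ge 0$ such that evolution under $H'$ for any time $t$ can be achieved in this way (in the limit of arbitrarily fine time slicing) using $H$ for total time $t/\gamma$. The elementary allowed simulations are: rescaling ($cH$, $c>0$, is obtained from $H$ at rate $1/c$ and conversely); appending ancillas ($H$ and $H\otimes I_{A'B'}$ simulate each other at rate 1); adding local Hamiltonians at no cost; conjugation by local unitaries ($H$ and $UHU^\dagger$, $U=U_A\otimes U_B$, simulate each other at rate 1); and time sharing (using $H_1$ a fraction $p$ of the time and $H_2$ a fraction $1-p$ yields $pH_1+(1-p)H_2$ at rate $\ge 1$, by the Lie–Trotter formula), and compositions of these. *)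

theory Defs
  imports Complex_Main "HOL-Library.Extended_Real" "Jordan_Normal_Form.Schur_Decomposition"
begin

text \<open>A bipartite system C^dA (x) C^dB is identified with C^(dA*dB); the basis
  vector |a>|b> has index a*dB+b (standard Kronecker ordering).\<close>

definition hermitian_mat :: "nat \<Rightarrow> complex mat \<Rightarrow> bool" where
  "hermitian_mat n H \<longleftrightarrow> H \<in> carrier_mat n n \<and> mat_adjoint H = H"

definition unitary_mat :: "nat \<Rightarrow> complex mat \<Rightarrow> bool" where
  "unitary_mat n U \<longleftrightarrow> U \<in> carrier_mat n n \<and> mat_adjoint U * U = 1\<^sub>m n"

definition kron :: "complex mat \<Rightarrow> complex mat \<Rightarrow> complex mat" where
  "kron A B = mat (dim_row A * dim_row B) (dim_col A * dim_col B)
     (\<lambda>(i,j). A $$ (i div dim_row B, j div dim_col B) * B $$ (i mod dim_row B, j mod dim_col B))"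

definition mexp :: "complex mat \<Rightarrow> complex mat" where
  "mexp A = mat (dim_row A) (dim_col A)
     (\<lambda>(i,j). (\<Sum>k. (A ^\<^sub>m k) $$ (i,j) / of_nat (fact k)))"

definition evol :: "complex mat \<Rightarrow> real \<Rightarrow> complex mat" where
  "evol H t = mexp ((- \<i> * complex_of_real t) \<cdot>\<^sub>m H)"

definition vnorm :: "complex vec \<Rightarrow> real" where
  "vnorm v = sqrt (\<Sum>i<dim_vec v. (cmod (v $ i))\<^sup>2)"

definition compress :: "nat \<Rightarrow> complex mat \<Rightarrow> complex mat" where
  "compress m J = mat m m (\<lambda>(i,j). J $$ (i,j))"

text \<open>H acts on A (dim dA) (x) B (dim dB); the target H'
  acts on A' (dim dA') (x) B' (dim dB').  Alice's workspace is
  A (x) A' (x) N_A (dimension dA*dA'*nA, index (a*dA'+a')*nA+n), Bob's is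
  B (x) B' (x) N_B; N_A, N_B are ancillas of arbitrary finite dimension.
  The total space is Alice-workspace (x) Bob-workspace.\<close>

definition wsA :: "nat \<Rightarrow> nat \<Rightarrow> nat \<Rightarrow> nat" where
  "wsA d d' n = d * d' * n"

definition ws_dec :: "nat \<Rightarrow> nat \<Rightarrow> nat \<Rightarrow> nat \<times> nat \<times> nat" where
  "ws_dec d' n \<alpha> = (\<alpha> div (d' * n), (\<alpha> div n) mod d', \<alpha> mod n)"

text \<open>H acting on the A,B factors, identity on A',B' and the ancillas.\<close>
definition ext_ham :: "nat \<Rightarrow> nat \<Rightarrow> nat \<Rightarrow> nat \<Rightarrow> nat \<Rightarrow> nat \<Rightarrow> complex mat \<Rightarrow> complex mat" where
  "ext_ham dA dA' nA dB dB' nB H =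
    (let wB = wsA dB dB' nB; N = wsA dA dA' nA * wB in
     mat N N (\<lambda>(i,j).
       (case (ws_dec dA' nA (i div wB), ws_dec dB' nB (i mod wB),
              ws_dec dA' nA (j div wB), ws_dec dB' nB (j mod wB)) of
         ((a,x,n),(b,y,m),(a2,x2,n2),(b2,y2,m2)) \<Rightarrow>
           if x = x2 \<and> n = n2 \<and> y = y2 \<and> m = m2
           then H $$ (a * dB + b, a2 * dB + b2) else 0)))"

text \<open>Embedding of a state v of A'B' together with a state phi of the rest
  (A N_A B N_B, index ((a*nA+n)*dB + b)*nB + m) into the total space.
  With phi = |0...0> this is the initial state (ancillas attached in |0>).\<close>
definition place :: "nat \<Rightarrow> nat \<Rightarrow> nat \<Rightarrow> nat \<Rightarrow> nat \<Rightarrow> nat \<Rightarrow> complex vec \<Rightarrow> complex vec \<Rightarrow> complex vec" where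
  "place dA dA' nA dB dB' nB v phi =
    (let wB = wsA dB dB' nB; N = wsA dA dA' nA * wB in
     vec N (\<lambda>i.
       (case (ws_dec dA' nA (i div wB), ws_dec dB' nB (i mod wB)) of
         ((a,x,n),(b,y,m)) \<Rightarrow>
            v $ (x * dB' + y) * phi $ (((a * nA + n) * dB + b) * nB + m))))"

definition ket0 :: "nat \<Rightarrow> complex vec" where
  "ket0 N = vec N (\<lambda>i. if i = 0 then 1 else 0)"

text \<open>A step (UA, UB, tau): apply the instantaneous local unitary UA (x) UB,
  then switch on H for time tau.\<close>
definition run_steps :: "complex mat \<Rightarrow> (complex mat \<times> complex mat \<times> real) list \<Rightarrow> complex vec \<Rightarrow> complex vec" where
  "run_steps Ht steps v0 = foldl (\<lambda>v (UA, UB, tau). evol Ht tau *\<^sub>v (kron UA UB *\<^sub>v v)) v0 steps"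

text \<open>A protocol is a list of segments (steps, (WA, WB), s): after the steps
  of segments 0..j the evolution e^{-iH's_j} must be available (up to error
  eps, for every normalised input) after the local unitary WA (x) WB
  (which can be undone / absorbed into the next local unitary).
  Checkpoint times s_j are increasing with gaps \<le> delta, the last being t;
  total time for which H is switched on is t/gamma.\<close>
definition achieves ::
  "nat \<Rightarrow> nat \<Rightarrow> complex mat \<Rightarrow> nat \<Rightarrow> nat \<Rightarrow> complex mat \<Rightarrow> real \<Rightarrow> bool" where
  "achieves dA dB H dA' dB' H' \<gamma> \<longleftrightarrow> \<gamma> > 0 \<and>
    (\<forall>t>0. \<forall>\<epsilon>>0. \<forall>\<delta>>0. \<exists>nA nB.
      \<exists>segs :: ((complex mat \<times> complex mat \<times> real) list \<times> (complex mat \<times> complex mat) \<times> real) list.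
        nA \<ge> 1 \<and> nB \<ge> 1 \<and> segs \<noteq> [] \<and>
        (\<forall>seg\<in>set segs. (\<forall>(UA, UB, tau)\<in>set (fst seg).
              unitary_mat (wsA dA dA' nA) UA \<and> unitary_mat (wsA dB dB' nB) UB \<and> tau \<ge> 0) \<and>
           unitary_mat (wsA dA dA' nA) (fst (fst (snd seg))) \<and>
           unitary_mat (wsA dB dB' nB) (snd (fst (snd seg)))) \<and>
        (\<forall>j<length segs. 0 < snd (snd (segs ! j)) \<and>
            (j = 0 \<longrightarrow> snd (snd (segs ! j)) \<le> \<delta>) \<and>
            (j > 0 \<longrightarrow> snd (snd (segs ! (j - 1))) < snd (snd (segs ! j)) \<and>
                       snd (snd (segs ! j)) - snd (snd (segs ! (j - 1))) \<le> \<delta>)) \<and>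
        snd (snd (last segs)) = t \<and>
        (\<Sum>seg\<leftarrow>segs. \<Sum>(UA, UB, tau)\<leftarrow>fst seg. tau) = t / \<gamma> \<and>
        (\<forall>\<psi>. dim_vec \<psi> = dA' * dB' \<and> vnorm \<psi> = 1 \<longrightarrow>
          (\<forall>j<length segs.
             \<exists>\<phi>. dim_vec \<phi> = dA * nA * dB * nB \<and>
               vnorm (kron (fst (fst (snd (segs ! j)))) (snd (fst (snd (segs ! j))))
                        *\<^sub>v run_steps (ext_ham dA dA' nA dB dB' nB H)
                               (concat (map fst (take (Suc j) segs)))
                               (place dA dA' nA dB dB' nB \<psi> (ket0 (dA * nA * dB * nB)))
                      - place dA dA' nA dB dB' nB (evol H' (snd (snd (segs ! j))) *\<^sub>v \<psi>) \<phi>)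
               \<le> \<epsilon>)))"

definition msum :: "nat \<Rightarrow> complex mat list \<Rightarrow> complex mat" where
  "msum n Ms = foldr (+) Ms (0\<^sub>m n n)"

definition sim_rate :: "nat \<Rightarrow> nat \<Rightarrow> complex mat \<Rightarrow> nat \<Rightarrow> nat \<Rightarrow> complex mat \<Rightarrow> ereal" where
  "sim_rate dA dB H dA' dB' H' = Sup (ereal ` {\<gamma>. achieves dA dB H dA' dB' H' \<gamma>})"

end

theory Submission
  imports Defs "HOL-Analysis.L2_Norm"
begin


lemma adj_dims[simp]: "dim_row (mat_adjoint A) = dim_col A" "dim_col (mat_adjoint A) = dim_row A"
  by (auto simp: mat_adjoint_def)

lemma adj_index[simp]: "i < dim_col A \<Longrightarrow> j < dim_row A \<Longrightarrow> mat_adjoint A $$ (i,j) = cnj (A $$ (j,i))"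
  by (simp add: mat_adjoint_def mat_of_rows_def)

lemma adj_carrier[simp]: "A \<in> carrier_mat n m \<Longrightarrow> mat_adjoint A \<in> carrier_mat m n"
  by (metis adj_dims carrier_matD carrier_matI)

lemma mult_index_sum: "A \<in> carrier_mat n m \<Longrightarrow> B \<in> carrier_mat m k \<Longrightarrow> i < n \<Longrightarrow> j < k \<Longrightarrow>
   (A * B) $$ (i,j) = (\<Sum>l<m. A $$ (i,l) * B $$ (l,j))"
  by (simp add: scalar_prod_def atLeast0LessThan)

lemma mult_vec_index_sum: "A \<in> carrier_mat n m \<Longrightarrow> v \<in> carrier_vec m \<Longrightarrow> i < n \<Longrightarrow>
   (A *\<^sub>v v) $ i = (\<Sum>l<m. A $$ (i,l) * v $ l)"
  by (simp add: scalar_prod_def atLeast0LessThan)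

definition mn :: "complex mat \<Rightarrow> real" where
  "mn A = (\<Sum>i<dim_row A. \<Sum>j<dim_col A. cmod (A $$ (i,j)))"

lemma mn_nonneg: "mn A \<ge> 0" unfolding mn_def by (intro sum_nonneg) auto

lemma mn_entry: "i < dim_row A \<Longrightarrow> j < dim_col A \<Longrightarrow> cmod (A $$ (i,j)) \<le> mn A"
proof -
  assume i: "i < dim_row A" and j: "j < dim_col A"
  have 1: "cmod (A $$ (i,j)) \<le> (\<Sum>j<dim_col A. cmod (A $$ (i,j)))"
    using j by (intro member_le_sum) auto
  have 2: "(\<Sum>j<dim_col A. cmod (A $$ (i,j))) \<le> mn A" unfolding mn_def using i
    by (intro member_le_sum[where f="\<lambda>i. \<Sum>j<dim_col A. cmod (A $$ (i,j))"]) (auto intro: sum_nonneg)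
  from 1 2 show ?thesis by linarith
qed

lemma mn_bound: assumes "A \<in> carrier_mat n m" "\<And>i j. i < n \<Longrightarrow> j < m \<Longrightarrow> cmod (A $$ (i,j)) \<le> b"
  shows "mn A \<le> real n * real m * b"
proof -
  have "mn A = (\<Sum>i<n. \<Sum>j<m. cmod (A $$ (i,j)))" using assms(1) by (simp add: mn_def)
  also have "\<dots> \<le> (\<Sum>i<n. \<Sum>j<m. b)" by (intro sum_mono assms(2)) auto
  also have "\<dots> = real n * real m * b" by simp
  finally show ?thesis .
qed

lemma mn_mult: assumes "A \<in> carrier_mat n m" "B \<in> carrier_mat m k"
  shows "mn (A * B) \<le> mn A * mn B"
proof -
  have s1: "mn (A * B) = (\<Sum>i<n. \<Sum>j<k. cmod (\<Sum>l<m. A $$ (i,l) * B $$ (l,j)))"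
  proof -
    have "mn (A*B) = (\<Sum>i<n. \<Sum>j<k. cmod ((A*B)$$(i,j)))" using assms by (simp add: mn_def)
    also have "\<dots> = (\<Sum>i<n. \<Sum>j<k. cmod (\<Sum>l<m. A $$ (i,l) * B $$ (l,j)))"
      by (intro sum.cong refl arg_cong[where f=cmod] mult_index_sum[OF assms]) auto
    finally show ?thesis .
  qed
  have s2: "(\<Sum>i<n. \<Sum>j<k. cmod (\<Sum>l<m. A $$ (i,l) * B $$ (l,j))) \<le> (\<Sum>i<n. \<Sum>j<k. \<Sum>l<m. \<Sum>l'<m. cmod (A $$ (i,l)) * cmod (B $$ (l',j)))"
  proof (intro sum_mono)
    fix i j
    have a: "cmod (\<Sum>l<m. A $$ (i,l) * B $$ (l,j)) \<le> (\<Sum>l<m. cmod (A $$ (i,l)) * cmod (B $$ (l,j)))"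
      by (rule order_trans[OF norm_sum]) (simp add: norm_mult)
    have b: "(\<Sum>l<m. cmod (A $$ (i,l)) * cmod (B $$ (l,j))) \<le> (\<Sum>l<m. \<Sum>l'<m. cmod (A $$ (i,l)) * cmod (B $$ (l',j)))"
    proof (intro sum_mono)
      fix l assume "l \<in> {..<m}"
      then show "cmod (A $$ (i,l)) * cmod (B $$ (l,j)) \<le> (\<Sum>l'<m. cmod (A $$ (i,l)) * cmod (B $$ (l',j)))"
        by (intro member_le_sum[where f="\<lambda>l'. cmod (A $$ (i,l)) * cmod (B $$ (l',j))"]) auto
    qed
    from a b show "cmod (\<Sum>l<m. A $$ (i,l) * B $$ (l,j)) \<le> (\<Sum>l<m. \<Sum>l'<m. cmod (A $$ (i,l)) * cmod (B $$ (l',j)))"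
      by linarith
  qed
  have e: "(\<Sum>j<k. \<Sum>l<m. \<Sum>l'<m. cmod (A $$ (i,l)) * cmod (B $$ (l',j))) =
          (\<Sum>l<m. cmod (A $$ (i,l)) * (\<Sum>l'<m. \<Sum>j<k. cmod (B $$ (l',j))))" for i
  proof -
    have "(\<Sum>j<k. \<Sum>l<m. \<Sum>l'<m. cmod (A $$ (i,l)) * cmod (B $$ (l',j))) =
          (\<Sum>l<m. \<Sum>j<k. \<Sum>l'<m. cmod (A $$ (i,l)) * cmod (B $$ (l',j)))"
      by (rule sum.swap)
    also have "\<dots> = (\<Sum>l<m. \<Sum>l'<m. \<Sum>j<k. cmod (A $$ (i,l)) * cmod (B $$ (l',j)))"
      by (rule sum.cong[OF refl], rule sum.swap)
    also have "\<dots> = (\<Sum>l<m. cmod (A $$ (i,l)) * (\<Sum>l'<m. \<Sum>j<k. cmod (B $$ (l',j))))"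
      by (simp only: sum_distrib_left)
    finally show ?thesis .
  qed
  have s3: "(\<Sum>i<n. \<Sum>j<k. \<Sum>l<m. \<Sum>l'<m. cmod (A $$ (i,l)) * cmod (B $$ (l',j)))
      = (\<Sum>i<n. \<Sum>l<m. cmod (A $$ (i,l))) * (\<Sum>l'<m. \<Sum>j<k. cmod (B $$ (l',j)))"
    by (simp only: e sum_distrib_right)
  have s4: "(\<Sum>i<n. \<Sum>l<m. cmod (A $$ (i,l))) * (\<Sum>l'<m. \<Sum>j<k. cmod (B $$ (l',j))) = mn A * mn B"
    using assms by (simp add: mn_def)
  from s1 s2 s3 s4 show ?thesis by linarith
qed

lemma mn_add: assumes "A \<in> carrier_mat n m" "B \<in> carrier_mat n m"
  shows "mn (A + B) \<le> mn A + mn B"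
proof -
  have "mn (A + B) = (\<Sum>i<n. \<Sum>j<m. cmod (A $$ (i,j) + B $$ (i,j)))"
    using assms by (simp add: mn_def)
  also have "\<dots> \<le> (\<Sum>i<n. \<Sum>j<m. cmod (A $$ (i,j)) + cmod (B $$ (i,j)))"
    by (intro sum_mono norm_triangle_ineq)
  also have "\<dots> = mn A + mn B" using assms by (simp add: mn_def sum.distrib)
  finally show ?thesis .
qed

lemma mn_minus: assumes "A \<in> carrier_mat n m" "B \<in> carrier_mat n m"
  shows "mn (A - B) \<le> mn A + mn B"
proof -
  have "mn (A - B) = (\<Sum>i<n. \<Sum>j<m. cmod (A $$ (i,j) - B $$ (i,j)))"
    using assms by (simp add: mn_def)
  also have "\<dots> \<le> (\<Sum>i<n. \<Sum>j<m. cmod (A $$ (i,j)) + cmod (B $$ (i,j)))"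
    by (intro sum_mono norm_triangle_ineq4)
  also have "\<dots> = mn A + mn B" using assms by (simp add: mn_def sum.distrib)
  finally show ?thesis .
qed

lemma mn_smult: "mn (c \<cdot>\<^sub>m A) = cmod c * mn A"
  by (simp add: mn_def norm_mult sum_distrib_left)

lemma mn_one: "mn (1\<^sub>m n) = real n"
proof -
  have "mn (1\<^sub>m n) = (\<Sum>i<n. \<Sum>j<n. cmod ((1\<^sub>m n) $$ (i,j)))" by (simp add: mn_def)
  also have "\<dots> = (\<Sum>i<n. \<Sum>j<n. if i = j then 1 else 0)"
    by (intro sum.cong refl) auto
  also have "\<dots> = (\<Sum>i<n. 1)" by (intro sum.cong refl) auto
  finally show ?thesis by simp
qed

lemma mn_pow: assumes "A \<in> carrier_mat n n" shows "mn (A ^\<^sub>m k) \<le> real n * mn A ^ k"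
proof (induction k)
  case 0 then show ?case using assms by (simp add: mn_one)
next
  case (Suc k)
  have "mn (A ^\<^sub>m Suc k) = mn (A ^\<^sub>m k * A)" by simp
  also have "\<dots> \<le> mn (A ^\<^sub>m k) * mn A" using assms by (intro mn_mult) auto
  also have "\<dots> \<le> real n * mn A ^ k * mn A" using Suc mn_nonneg by (intro mult_right_mono) auto
  finally show ?case by (simp add: mult_ac)
qed

lemma vnorm_L2: "vnorm v = L2_set (\<lambda>i. cmod (v $ i)) {..<dim_vec v}"
  by (simp add: vnorm_def L2_set_def)

lemma vnorm_nonneg: "vnorm v \<ge> 0" by (simp add: vnorm_L2)

lemma vnorm_entry: "i < dim_vec v \<Longrightarrow> cmod (v $ i) \<le> vnorm v"
  unfolding vnorm_L2 by (rule member_le_L2_set) auto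

lemma vnorm_mult: assumes "A \<in> carrier_mat n m" "v \<in> carrier_vec m"
  shows "vnorm (A *\<^sub>v v) \<le> mn A * vnorm v"
proof -
  have "vnorm (A *\<^sub>v v) \<le> (\<Sum>i<n. cmod ((A *\<^sub>v v) $ i))"
    unfolding vnorm_L2 using assms by (intro order_trans[OF L2_set_le_sum]) auto
  also have "\<dots> \<le> (\<Sum>i<n. \<Sum>l<m. cmod (A $$ (i,l)) * vnorm v)"
  proof (intro sum_mono)
    fix i assume i: "i \<in> {..<n}"
    have "cmod ((A *\<^sub>v v) $ i) = cmod (\<Sum>l<m. A $$ (i,l) * v $ l)"
      by (subst mult_vec_index_sum[OF assms]) (use i in auto)
    also have "\<dots> \<le> (\<Sum>l<m. cmod (A $$ (i,l)) * cmod (v $ l))"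
      by (rule order_trans[OF norm_sum]) (simp add: norm_mult)
    also have "\<dots> \<le> (\<Sum>l<m. cmod (A $$ (i,l)) * vnorm v)"
      using assms by (intro sum_mono mult_left_mono vnorm_entry) auto
    finally show "cmod ((A *\<^sub>v v) $ i) \<le> (\<Sum>l<m. cmod (A $$ (i,l)) * vnorm v)" .
  qed
  also have "\<dots> = mn A * vnorm v" using assms by (simp add: mn_def sum_distrib_right)
  finally show ?thesis .
qed

lemma vnorm_add: assumes "u \<in> carrier_vec n" "v \<in> carrier_vec n"
  shows "vnorm (u + v) \<le> vnorm u + vnorm v"
proof -
  have "vnorm (u + v) = L2_set (\<lambda>i. cmod (u $ i + v $ i)) {..<n}"
    unfolding vnorm_L2 using assms by (auto intro!: L2_set_cong)
  also have "\<dots> \<le> L2_set (\<lambda>i. cmod (u $ i) + cmod (v $ i)) {..<n}"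
    by (intro L2_set_mono norm_triangle_ineq) auto
  also have "\<dots> \<le> vnorm u + vnorm v"
    using assms by (simp add: vnorm_L2 L2_set_triangle_ineq)
  finally show ?thesis .
qed

lemma vnorm_minus: assumes "u \<in> carrier_vec n" "v \<in> carrier_vec n"
  shows "vnorm (u - v) \<le> vnorm u + vnorm v"
proof -
  have "vnorm (u - v) = L2_set (\<lambda>i. cmod (u $ i - v $ i)) {..<n}"
    unfolding vnorm_L2 using assms by (auto intro!: L2_set_cong)
  also have "\<dots> \<le> L2_set (\<lambda>i. cmod (u $ i) + cmod (v $ i)) {..<n}"
    by (intro L2_set_mono norm_triangle_ineq4) auto
  also have "\<dots> \<le> vnorm u + vnorm v"
    using assms by (simp add: vnorm_L2 L2_set_triangle_ineq)
  finally show ?thesis .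
qed

lemma vnorm_sq: "complex_of_real ((vnorm v)\<^sup>2) = (\<Sum>i<dim_vec v. cnj (v $ i) * v $ i)"
proof -
  have "(vnorm v)\<^sup>2 = (\<Sum>i<dim_vec v. (cmod (v $ i))\<^sup>2)"
    unfolding vnorm_def by (simp add: sum_nonneg)
  then show ?thesis
    by (simp only: of_real_sum) (rule sum.cong[OF refl], subst complex_norm_square, simp add: mult.commute)
qed

lemma vnorm_unitary: assumes U: "U \<in> carrier_mat n n" and UU: "mat_adjoint U * U = 1\<^sub>m n"
  and v: "v \<in> carrier_vec n"
  shows "vnorm (U *\<^sub>v v) = vnorm v"
proof -
  have uu: "(\<Sum>i<n. cnj (U $$ (i,k)) * U $$ (i,l)) = (if k = l then 1 else 0)" if "k < n" "l < n" for k l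
  proof -
    have "(mat_adjoint U * U) $$ (k,l) = (\<Sum>i<n. cnj (U $$ (i,k)) * U $$ (i,l))"
    proof -
      have "(mat_adjoint U * U) $$ (k,l) = (\<Sum>i<n. mat_adjoint U $$ (k,i) * U $$ (i,l))"
        by (rule mult_index_sum[of _ n n _ n]) (use that U in auto)
      also have "\<dots> = (\<Sum>i<n. cnj (U $$ (i,k)) * U $$ (i,l))"
        by (intro sum.cong refl) (use that U in auto)
      finally show ?thesis .
    qed
    then show ?thesis using UU that by simp
  qed
  have "complex_of_real ((vnorm (U *\<^sub>v v))\<^sup>2) = (\<Sum>i<n. cnj ((U *\<^sub>v v) $ i) * (U *\<^sub>v v) $ i)"
    by (simp only: vnorm_sq) (use U in simp)
  also have "\<dots> = (\<Sum>i<n. cnj (\<Sum>k<n. U $$ (i,k) * v $ k) * (\<Sum>l<n. U $$ (i,l) * v $ l))"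
    by (intro sum.cong refl, simp only: mult_vec_index_sum[OF U v] lessThan_iff)
  also have "\<dots> = (\<Sum>i<n. \<Sum>k<n. \<Sum>l<n. cnj (v $ k) * v $ l * (cnj (U $$ (i,k)) * U $$ (i,l)))"
    by (simp add: sum_distrib_left sum_distrib_right mult_ac)
  also have "\<dots> = (\<Sum>k<n. \<Sum>l<n. \<Sum>i<n. cnj (v $ k) * v $ l * (cnj (U $$ (i,k)) * U $$ (i,l)))"
  proof -
    have "(\<Sum>i<n. \<Sum>k<n. \<Sum>l<n. cnj (v $ k) * v $ l * (cnj (U $$ (i,k)) * U $$ (i,l))) =
          (\<Sum>k<n. \<Sum>i<n. \<Sum>l<n. cnj (v $ k) * v $ l * (cnj (U $$ (i,k)) * U $$ (i,l)))"
      by (rule sum.swap)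
    also have "\<dots> = (\<Sum>k<n. \<Sum>l<n. \<Sum>i<n. cnj (v $ k) * v $ l * (cnj (U $$ (i,k)) * U $$ (i,l)))"
      by (rule sum.cong[OF refl], rule sum.swap)
    finally show ?thesis .
  qed
  also have "\<dots> = (\<Sum>k<n. \<Sum>l<n. cnj (v $ k) * v $ l * (if k = l then 1 else 0))"
    by (intro sum.cong refl) (simp add: sum_distrib_left[symmetric] uu)
  also have "\<dots> = (\<Sum>k<n. cnj (v $ k) * v $ k)"
    by (intro sum.cong refl) (simp add: if_distrib cong: if_cong)
  also have "\<dots> = complex_of_real ((vnorm v)\<^sup>2)" by (simp only: vnorm_sq) (use v in simp)
  finally have "(vnorm (U *\<^sub>v v))\<^sup>2 = (vnorm v)\<^sup>2" using of_real_eq_iff by blast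
  then show ?thesis using vnorm_nonneg by (simp add: power2_eq_iff_nonneg)
qed


definition ser :: "complex mat \<Rightarrow> complex \<Rightarrow> nat \<Rightarrow> nat \<Rightarrow> nat \<Rightarrow> complex" where
  "ser A c i j k = (A ^\<^sub>m k) $$ (i,j) * c ^ k / of_nat (fact k)"

lemma one_index: "i < n \<Longrightarrow> j < n \<Longrightarrow> (1\<^sub>m n :: complex mat) $$ (i,j) = (if i = j then 1 else 0)"
  by simp

lemma smult_pow_index: fixes A :: "complex mat" assumes A: "A \<in> carrier_mat n n" and i: "i < n" and j: "j < n"
  shows "((c \<cdot>\<^sub>m A) ^\<^sub>m k) $$ (i,j) = c ^ k * (A ^\<^sub>m k) $$ (i,j)"
  using i j
proof (induction k arbitrary: i j)
  case 0 then show ?case using A by simp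
next
  case (Suc k)
  have cA: "c \<cdot>\<^sub>m A \<in> carrier_mat n n" using A by simp
  have "((c \<cdot>\<^sub>m A) ^\<^sub>m Suc k) $$ (i,j) = (\<Sum>l<n. ((c \<cdot>\<^sub>m A) ^\<^sub>m k) $$ (i,l) * (c \<cdot>\<^sub>m A) $$ (l,j))"
    by (simp only: pow_mat.simps) (rule mult_index_sum[of _ n n _ n], use cA Suc in auto)
  also have "\<dots> = (\<Sum>l<n. c ^ Suc k * ((A ^\<^sub>m k) $$ (i,l) * A $$ (l,j)))"
    by (intro sum.cong refl) (use Suc A in \<open>simp\<close>, algebra)
  also have "\<dots> = c ^ Suc k * (\<Sum>l<n. (A ^\<^sub>m k) $$ (i,l) * A $$ (l,j))"
    by (simp add: sum_distrib_left)
  also have "(\<Sum>l<n. (A ^\<^sub>m k) $$ (i,l) * A $$ (l,j)) = (A ^\<^sub>m Suc k) $$ (i,j)"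
    by (simp only: pow_mat.simps) (rule mult_index_sum[of _ n n _ n, symmetric], use A Suc in auto)
  finally show ?case .
qed

lemma mexp_carrier: "(A::complex mat) \<in> carrier_mat n n \<Longrightarrow> mexp (c \<cdot>\<^sub>m A) \<in> carrier_mat n n"
  by (simp add: mexp_def)

lemma mexp_index: assumes A: "A \<in> carrier_mat n n" and i: "i < n" and j: "j < n"
  shows "mexp (c \<cdot>\<^sub>m A) $$ (i,j) = (\<Sum>k. ser A c i j k)"
proof -
  have "mexp (c \<cdot>\<^sub>m A) $$ (i,j) = (\<Sum>k. ((c \<cdot>\<^sub>m A) ^\<^sub>m k) $$ (i,j) / of_nat (fact k))"
    using A i j by (simp add: mexp_def)
  also have "\<dots> = (\<Sum>k. ser A c i j k)"
    by (rule arg_cong[where f=suminf], rule ext) (simp add: smult_pow_index[OF A i j] ser_def mult_ac)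
  finally show ?thesis .
qed

lemma summable_exp_real: "summable (\<lambda>k. (x::real) ^ k / fact k)"
  using summable_exp[of x] by (simp add: divide_inverse mult.commute)

lemma exp_real_series: "(\<Sum>k. (x::real) ^ k / fact k) = exp x"
  using exp_converges[of x] by (simp add: sums_iff divide_inverse mult.commute scaleR_conv_of_real)

lemma ser_bound: assumes A: "A \<in> carrier_mat n n" and i: "i < n" and j: "j < n"
  shows "cmod (ser A c i j k) \<le> real n * ((cmod c * mn A) ^ k / fact k)"
proof -
  have "cmod ((A ^\<^sub>m k) $$ (i,j)) \<le> mn (A ^\<^sub>m k)" using A i j by (intro mn_entry) auto
  also have "\<dots> \<le> real n * mn A ^ k" by (rule mn_pow[OF A])
  finally have b: "cmod ((A ^\<^sub>m k) $$ (i,j)) \<le> real n * mn A ^ k" .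
  have "cmod (ser A c i j k) = cmod ((A ^\<^sub>m k) $$ (i,j)) * cmod c ^ k / fact k"
    by (simp add: ser_def norm_mult norm_divide norm_power)
  also have "\<dots> \<le> real n * mn A ^ k * cmod c ^ k / fact k"
    by (intro divide_right_mono mult_right_mono b) auto
  also have "\<dots> = real n * ((cmod c * mn A) ^ k / fact k)" by (simp add: power_mult_distrib)
  finally show ?thesis .
qed

lemma ser_summable_norm: assumes A: "A \<in> carrier_mat n n" and i: "i < n" and j: "j < n"
  shows "summable (\<lambda>k. cmod (ser A c i j k))"
  by (rule summable_comparison_test[OF _ summable_mult[OF summable_exp_real]])
     (use ser_bound[OF A i j] in auto)

lemma ser_summable: assumes A: "A \<in> carrier_mat n n" and i: "i < n" and j: "j < n"
  shows "summable (\<lambda>k. ser A c i j k)"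
  by (rule summable_norm_cancel[OF ser_summable_norm[OF A i j]])

lemma mexp_zero: assumes A: "A \<in> carrier_mat n n"
  shows "mexp ((0::complex) \<cdot>\<^sub>m A) = 1\<^sub>m n"
proof (rule eq_matI)
  fix i j assume i: "i < dim_row (1\<^sub>m n :: complex mat)" and j: "j < dim_col (1\<^sub>m n :: complex mat)"
  then have i: "i < n" and j: "j < n" by auto
  have "mexp ((0::complex) \<cdot>\<^sub>m A) $$ (i,j) = (\<Sum>k. ser A 0 i j k)" by (rule mexp_index[OF A i j])
  also have "\<dots> = (\<Sum>k\<in>{0}. ser A 0 i j k)"
    by (rule suminf_finite) (auto simp: ser_def)
  also have "\<dots> = (1\<^sub>m n) $$ (i,j)" using A i j by (simp add: ser_def)
  finally show "mexp ((0::complex) \<cdot>\<^sub>m A) $$ (i,j) = (1\<^sub>m n) $$ (i,j)" .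
qed (use A in \<open>auto simp: mexp_def\<close>)

lemma pow_add_mat: assumes A: "A \<in> carrier_mat n n"
  shows "A ^\<^sub>m k * A ^\<^sub>m l = A ^\<^sub>m (k + l)"
proof (induction l)
  case 0 then show ?case using A by simp
next
  case (Suc l)
  have "A ^\<^sub>m k * A ^\<^sub>m Suc l = A ^\<^sub>m k * (A ^\<^sub>m l * A)" by simp
  also have "\<dots> = (A ^\<^sub>m k * A ^\<^sub>m l) * A"
    by (rule assoc_mult_mat[symmetric, of _ n n _ n _ n]) (use A in auto)
  also have "\<dots> = A ^\<^sub>m Suc (k + l)" using Suc by simp
  finally show ?case by simp
qed


lemma binom_coef: "(\<Sum>m\<le>k. (s::complex) ^ m * t ^ (k - m) / (fact m * fact (k - m))) = (s + t) ^ k / fact k"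
proof -
  have "(s + t) ^ k = (\<Sum>m\<le>k. of_nat (k choose m) * s ^ m * t ^ (k - m))" by (rule binomial_ring)
  also have "\<dots> = (\<Sum>m\<le>k. fact k * (s ^ m * t ^ (k - m) / (fact m * fact (k - m))))"
    by (intro sum.cong refl) (simp add: binomial_fact)
  also have "\<dots> = fact k * (\<Sum>m\<le>k. s ^ m * t ^ (k - m) / (fact m * fact (k - m)))"
    by (simp add: sum_distrib_left)
  finally show ?thesis by simp
qed

lemma ser_prod: "ser A s i l m * ser A t l j q =
   ((A ^\<^sub>m m) $$ (i,l) * (A ^\<^sub>m q) $$ (l,j)) * (s ^ m * t ^ q / (fact m * fact q))"
  by (simp add: ser_def)

lemma ser_cauchy_term: assumes A: "A \<in> carrier_mat n n" and i: "i < n" and j: "j < n"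
  shows "(\<Sum>l<n. \<Sum>m\<le>k. ser A s i l m * ser A t l j (k - m)) = ser A (s + t) i j k"
proof -
  have "(\<Sum>l<n. \<Sum>m\<le>k. ser A s i l m * ser A t l j (k - m)) =
        (\<Sum>m\<le>k. \<Sum>l<n. ser A s i l m * ser A t l j (k - m))" by (rule sum.swap)
  also have "\<dots> = (\<Sum>m\<le>k. (A ^\<^sub>m k) $$ (i,j) * (s ^ m * t ^ (k - m) / (fact m * fact (k - m))))"
  proof (intro sum.cong refl)
    fix m assume m: "m \<in> {..k}"
    have "(\<Sum>l<n. ser A s i l m * ser A t l j (k - m)) =
          (\<Sum>l<n. (A ^\<^sub>m m) $$ (i,l) * (A ^\<^sub>m (k - m)) $$ (l,j)) * (s ^ m * t ^ (k - m) / (fact m * fact (k - m)))"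
      by (simp only: ser_prod sum_distrib_right)
    also have "(\<Sum>l<n. (A ^\<^sub>m m) $$ (i,l) * (A ^\<^sub>m (k - m)) $$ (l,j)) = (A ^\<^sub>m m * A ^\<^sub>m (k - m)) $$ (i,j)"
      by (rule mult_index_sum[of _ n n _ n, symmetric]) (use A i j in auto)
    also have "A ^\<^sub>m m * A ^\<^sub>m (k - m) = A ^\<^sub>m k" using m by (simp add: pow_add_mat[OF A])
    finally show "(\<Sum>l<n. ser A s i l m * ser A t l j (k - m)) =
       (A ^\<^sub>m k) $$ (i,j) * (s ^ m * t ^ (k - m) / (fact m * fact (k - m)))" .
  qed
  also have "\<dots> = (A ^\<^sub>m k) $$ (i,j) * ((s + t) ^ k / fact k)"
    by (simp only: sum_distrib_left[symmetric] binom_coef)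
  also have "\<dots> = ser A (s + t) i j k" by (simp add: ser_def)
  finally show ?thesis .
qed

lemma mexp_add: assumes A: "A \<in> carrier_mat n n"
  shows "mexp (s \<cdot>\<^sub>m A) * mexp (t \<cdot>\<^sub>m A) = mexp ((s + t) \<cdot>\<^sub>m A)"
proof (rule eq_matI)
  fix i j assume "i < dim_row (mexp ((s + t) \<cdot>\<^sub>m A))" "j < dim_col (mexp ((s + t) \<cdot>\<^sub>m A))"
  then have i: "i < n" and j: "j < n" using A by (auto simp: mexp_def)
  have "(mexp (s \<cdot>\<^sub>m A) * mexp (t \<cdot>\<^sub>m A)) $$ (i,j) = (\<Sum>l<n. mexp (s \<cdot>\<^sub>m A) $$ (i,l) * mexp (t \<cdot>\<^sub>m A) $$ (l,j))"
    by (rule mult_index_sum[of _ n n _ n]) (use A i j mexp_carrier in auto)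
  also have "\<dots> = (\<Sum>l<n. (\<Sum>k. ser A s i l k) * (\<Sum>k. ser A t l j k))"
    by (intro sum.cong refl) (use A i j in \<open>simp add: mexp_index\<close>)
  also have "\<dots> = (\<Sum>l<n. \<Sum>k. \<Sum>m\<le>k. ser A s i l m * ser A t l j (k - m))"
    by (intro sum.cong refl Cauchy_product ser_summable_norm[OF A]) (use i j in auto)
  also have "\<dots> = (\<Sum>k. \<Sum>l<n. \<Sum>m\<le>k. ser A s i l m * ser A t l j (k - m))"
    by (rule suminf_sum[symmetric], rule summable_Cauchy_product, (rule ser_summable_norm[OF A]; use i j in auto)+)
  also have "\<dots> = (\<Sum>k. ser A (s + t) i j k)"
    by (simp add: ser_cauchy_term[OF A i j])
  also have "\<dots> = mexp ((s + t) \<cdot>\<^sub>m A) $$ (i,j)" by (rule mexp_index[OF A i j, symmetric])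
  finally show "(mexp (s \<cdot>\<^sub>m A) * mexp (t \<cdot>\<^sub>m A)) $$ (i,j) = mexp ((s + t) \<cdot>\<^sub>m A) $$ (i,j)" .
qed (use A in \<open>auto simp: mexp_def\<close>)

lemma herm_entry: "hermitian_mat n A \<Longrightarrow> i < n \<Longrightarrow> j < n \<Longrightarrow> cnj (A $$ (j,i)) = A $$ (i,j)"
  unfolding hermitian_mat_def by (metis adj_index carrier_matD(1) carrier_matD(2))

lemma pow_one_mat: "A \<in> carrier_mat n n \<Longrightarrow> A ^\<^sub>m 1 = A"
  by simp

lemma herm_pow: assumes H: "hermitian_mat n A" and i: "i < n" and j: "j < n"
  shows "cnj ((A ^\<^sub>m k) $$ (j,i)) = (A ^\<^sub>m k) $$ (i,j)"
  using i j
proof (induction k arbitrary: i j)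
  case 0 then show ?case using H by (auto simp: hermitian_mat_def)
next
  case (Suc k)
  have A: "A \<in> carrier_mat n n" using H by (simp add: hermitian_mat_def)
  have "cnj ((A ^\<^sub>m Suc k) $$ (j,i)) = cnj (\<Sum>l<n. (A ^\<^sub>m k) $$ (j,l) * A $$ (l,i))"
    by (simp only: pow_mat.simps, subst mult_index_sum[of _ n n _ n]) (use A Suc in auto)
  also have "\<dots> = (\<Sum>l<n. A $$ (i,l) * (A ^\<^sub>m k) $$ (l,j))"
    by (simp only: cnj_sum complex_cnj_mult, intro sum.cong refl)
       (use Suc H herm_entry in \<open>auto simp: mult.commute\<close>)
  also have "\<dots> = (A * A ^\<^sub>m k) $$ (i,j)"
    by (rule mult_index_sum[of _ n n _ n, symmetric]) (use A Suc in auto)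
  also have "A * A ^\<^sub>m k = A ^\<^sub>m Suc k"
    using pow_add_mat[OF A, of 1 k] A by simp
  finally show ?case .
qed

lemma cnj_suminf: "summable f \<Longrightarrow> cnj (suminf f) = (\<Sum>k. cnj (f k))"
  by (metis sums_cnj sums_unique summable_sums)

lemma mexp_adj: assumes H: "hermitian_mat n A"
  shows "mat_adjoint (mexp (c \<cdot>\<^sub>m A)) = mexp (cnj c \<cdot>\<^sub>m A)"
proof -
  have A: "A \<in> carrier_mat n n" using H by (simp add: hermitian_mat_def)
  show ?thesis
  proof (rule eq_matI)
    fix i j assume "i < dim_row (mexp (cnj c \<cdot>\<^sub>m A))" "j < dim_col (mexp (cnj c \<cdot>\<^sub>m A))"
    then have i: "i < n" and j: "j < n" using A by (auto simp: mexp_def)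
    have "mat_adjoint (mexp (c \<cdot>\<^sub>m A)) $$ (i,j) = cnj (mexp (c \<cdot>\<^sub>m A) $$ (j,i))"
      using A i j by (simp add: mexp_def)
    also have "\<dots> = cnj (\<Sum>k. ser A c j i k)" by (simp add: mexp_index[OF A j i])
    also have "\<dots> = (\<Sum>k. cnj (ser A c j i k))" by (rule cnj_suminf[OF ser_summable[OF A j i]])
    also have "\<dots> = (\<Sum>k. ser A (cnj c) i j k)"
      by (rule arg_cong[where f=suminf], rule ext) (simp add: ser_def herm_pow[OF H i j])
    also have "\<dots> = mexp (cnj c \<cdot>\<^sub>m A) $$ (i,j)" by (rule mexp_index[OF A i j, symmetric])
    finally show "mat_adjoint (mexp (c \<cdot>\<^sub>m A)) $$ (i,j) = mexp (cnj c \<cdot>\<^sub>m A) $$ (i,j)" .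
  qed (use A in \<open>auto simp: mexp_def\<close>)
qed

lemma evol_carrier: "A \<in> carrier_mat n n \<Longrightarrow> evol A t \<in> carrier_mat n n"
  unfolding evol_def by (rule mexp_carrier)

lemma evol_unitary: assumes H: "hermitian_mat n A" shows "unitary_mat n (evol A t)"
proof -
  have A: "A \<in> carrier_mat n n" using H by (simp add: hermitian_mat_def)
  let ?c = "- \<i> * complex_of_real t"
  have "mat_adjoint (evol A t) * evol A t = mexp (cnj ?c \<cdot>\<^sub>m A) * mexp (?c \<cdot>\<^sub>m A)"
    unfolding evol_def by (simp add: mexp_adj[OF H])
  also have "\<dots> = mexp ((cnj ?c + ?c) \<cdot>\<^sub>m A)" by (rule mexp_add[OF A])
  also have "cnj ?c + ?c = 0" by simp
  also have "mexp (0 \<cdot>\<^sub>m A) = 1\<^sub>m n" by (rule mexp_zero[OF A])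
  finally show ?thesis unfolding unitary_mat_def using evol_carrier[OF A] by simp
qed

lemma evol_add: assumes A: "A \<in> carrier_mat n n"
  shows "evol A s * evol A t = evol A (s + t)"
  unfolding evol_def by (simp add: mexp_add[OF A] algebra_simps)

lemma evol_zero: assumes A: "A \<in> carrier_mat n n" shows "evol A 0 = 1\<^sub>m n"
  unfolding evol_def using mexp_zero[OF A] by simp


lemma exp_tail: assumes "(x::real) \<ge> 0" shows "(\<Sum>k. x ^ (k + 2) / fact (k + 2)) \<le> exp x"
proof -
  have "exp x = (\<Sum>k. x ^ k / fact k)" by (simp add: exp_real_series)
  also have "\<dots> = (\<Sum>k. x ^ (k + 2) / fact (k + 2)) + (\<Sum>k<2. x ^ k / fact k)"
    by (rule suminf_split_initial_segment[OF summable_exp_real])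
  also have "(\<Sum>k<2. x ^ k / fact k) = 1 + x" by (simp add: eval_nat_numeral)
  finally show ?thesis using assms by simp
qed

lemma mexp_quad_entry: assumes A: "A \<in> carrier_mat n n" and c: "cmod c \<le> 1" and i: "i < n" and j: "j < n"
  shows "cmod ((\<Sum>k. ser A c i j k) - ser A c i j 0 - ser A c i j 1) \<le> (cmod c)^2 * (real n * exp (mn A))"
proof -
  let ?f = "ser A c i j"
  have sf: "summable ?f" by (rule ser_summable[OF A i j])
  have sn: "summable (\<lambda>k. cmod (?f k))" by (rule ser_summable_norm[OF A i j])
  have "(\<Sum>k. ?f k) = (\<Sum>k. ?f (k + 2)) + (\<Sum>k<2. ?f k)"
    by (rule suminf_split_initial_segment[OF sf])
  also have "(\<Sum>k<2. ?f k) = ?f 0 + ?f 1" by (simp add: eval_nat_numeral)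
  finally have e: "(\<Sum>k. ?f k) - ?f 0 - ?f 1 = (\<Sum>k. ?f (k + 2))" by simp
  have sn2: "summable (\<lambda>k. cmod (?f (k + 2)))"
    by (rule summable_iff_shift[THEN iffD2, OF sn])
  have sb: "summable (\<lambda>k. (cmod c)^2 * (real n * (mn A ^ (k + 2) / fact (k + 2))))"
    by (intro summable_mult summable_exp_real[THEN summable_iff_shift[where k=2, THEN iffD2]])
  have tb: "cmod (?f (k + 2)) \<le> (cmod c)^2 * (real n * (mn A ^ (k + 2) / fact (k + 2)))" for k
  proof -
    have "cmod (?f (k + 2)) \<le> real n * ((cmod c * mn A) ^ (k + 2) / fact (k + 2))"
      by (rule ser_bound[OF A i j])
    also have "\<dots> = cmod c ^ (k + 2) * (real n * (mn A ^ (k + 2) / fact (k + 2)))"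
      by (simp add: power_mult_distrib)
    also have "\<dots> \<le> cmod c ^ 2 * (real n * (mn A ^ (k + 2) / fact (k + 2)))"
      by (intro mult_right_mono power_decreasing c mult_nonneg_nonneg divide_nonneg_nonneg zero_le_power mn_nonneg) auto
    finally show ?thesis .
  qed
  have "cmod ((\<Sum>k. ?f k) - ?f 0 - ?f 1) = cmod (\<Sum>k. ?f (k + 2))" by (simp only: e)
  also have "\<dots> \<le> (\<Sum>k. cmod (?f (k + 2)))" by (rule summable_norm[OF sn2])
  also have "\<dots> \<le> (\<Sum>k. (cmod c)^2 * (real n * (mn A ^ (k + 2) / fact (k + 2))))"
    by (rule suminf_le[OF tb sn2 sb])
  also have "\<dots> = (cmod c)^2 * (real n * (\<Sum>k. mn A ^ (k + 2) / fact (k + 2)))"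
  proof -
    have s: "summable (\<lambda>k. mn A ^ (k + 2) / fact (k + 2))"
      by (rule summable_exp_real[THEN summable_iff_shift[where k=2, THEN iffD2]])
    show ?thesis by (simp only: suminf_mult[OF s] suminf_mult[OF summable_mult[OF s]])
  qed
  also have "\<dots> \<le> (cmod c)^2 * (real n * exp (mn A))"
    by (intro mult_left_mono exp_tail mn_nonneg) auto
  finally show ?thesis .
qed

lemma mexp_quad: assumes A: "A \<in> carrier_mat n n" and c: "cmod c \<le> 1"
  shows "mn (mexp (c \<cdot>\<^sub>m A) - 1\<^sub>m n - c \<cdot>\<^sub>m A) \<le> (cmod c)^2 * (real n ^ 3 * exp (mn A))"
proof -
  have "mn (mexp (c \<cdot>\<^sub>m A) - 1\<^sub>m n - c \<cdot>\<^sub>m A) \<le> real n * real n * ((cmod c)^2 * (real n * exp (mn A)))"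
  proof (rule mn_bound)
    show "mexp (c \<cdot>\<^sub>m A) - 1\<^sub>m n - c \<cdot>\<^sub>m A \<in> carrier_mat n n" by (rule minus_carrier_mat) (use A in simp)
    fix i j assume i: "i < n" and j: "j < n"
    have "(mexp (c \<cdot>\<^sub>m A) - 1\<^sub>m n - c \<cdot>\<^sub>m A) $$ (i,j) = mexp (c \<cdot>\<^sub>m A) $$ (i,j) - (1\<^sub>m n) $$ (i,j) - c * A $$ (i,j)"
      using A i j by (simp add: mexp_def)
    also have "\<dots> = (\<Sum>k. ser A c i j k) - ser A c i j 0 - ser A c i j 1"
      using A i j by (simp add: mexp_index[OF A i j] ser_def)
    finally show "cmod ((mexp (c \<cdot>\<^sub>m A) - 1\<^sub>m n - c \<cdot>\<^sub>m A) $$ (i,j)) \<le> (cmod c)^2 * (real n * exp (mn A))"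
      using mexp_quad_entry[OF A c i j] by simp
  qed
  also have "\<dots> = (cmod c)^2 * (real n ^ 3 * exp (mn A))" by (simp add: power3_eq_cube)
  finally show ?thesis .
qed


definition qa :: "nat \<Rightarrow> (real \<Rightarrow> complex mat) \<Rightarrow> complex mat \<Rightarrow> bool" where
  "qa n X A \<longleftrightarrow> A \<in> carrier_mat n n \<and> (\<forall>t. X t \<in> carrier_mat n n) \<and>
     (\<exists>C\<ge>0. \<forall>t. 0 < t \<and> t \<le> 1 \<longrightarrow> mn (X t - 1\<^sub>m n - complex_of_real t \<cdot>\<^sub>m A) \<le> C * t\<^sup>2)"

lemma smult_smult_mat: "a \<cdot>\<^sub>m (b \<cdot>\<^sub>m A) = (a * b) \<cdot>\<^sub>m (A :: complex mat)"
  by (rule eq_matI) (auto simp: mult.assoc)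

lemma qa_evol: assumes H: "hermitian_mat n H"
  shows "qa n (\<lambda>t. evol H (t / 4)) ((- \<i> / 4) \<cdot>\<^sub>m H)"
proof -
  have A: "H \<in> carrier_mat n n" using H by (simp add: hermitian_mat_def)
  let ?K = "real n ^ 3 * exp (mn H)"
  have K: "?K \<ge> 0" by simp
  have b: "mn (evol H (t / 4) - 1\<^sub>m n - complex_of_real t \<cdot>\<^sub>m ((- \<i> / 4) \<cdot>\<^sub>m H)) \<le> ?K * t\<^sup>2"
    if t: "0 < t" "t \<le> 1" for t
  proof -
    let ?c = "- \<i> * complex_of_real (t / 4)"
    have c: "complex_of_real t \<cdot>\<^sub>m ((- \<i> / 4) \<cdot>\<^sub>m H) = ?c \<cdot>\<^sub>m H"
      by (simp add: smult_smult_mat algebra_simps)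
    have cm: "cmod ?c = t / 4" using t by (simp add: norm_mult)
    have "mn (evol H (t / 4) - 1\<^sub>m n - complex_of_real t \<cdot>\<^sub>m ((- \<i> / 4) \<cdot>\<^sub>m H))
        = mn (mexp (?c \<cdot>\<^sub>m H) - 1\<^sub>m n - ?c \<cdot>\<^sub>m H)" by (simp only: c evol_def)
    also have "\<dots> \<le> (cmod ?c)\<^sup>2 * ?K" by (rule mexp_quad[OF A]) (use cm t in simp)
    also have "\<dots> \<le> ?K * t\<^sup>2" using cm t K by (simp add: power_divide)
    finally show ?thesis .
  qed
  have "\<exists>C\<ge>0. \<forall>t. 0 < t \<and> t \<le> 1 \<longrightarrow> mn (evol H (t / 4) - 1\<^sub>m n - complex_of_real t \<cdot>\<^sub>m ((- \<i> / 4) \<cdot>\<^sub>m H)) \<le> C * t\<^sup>2"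
    using K b by blast
  then show ?thesis unfolding qa_def using A evol_carrier[OF A] smult_carrier_mat[OF A] by blast
qed

lemma qa_one: "qa n (\<lambda>t. 1\<^sub>m n) (0\<^sub>m n n)"
  unfolding qa_def by (auto intro!: exI[of _ 0] simp: mn_def)

lemma qa_mult: assumes X: "qa n X A" and Y: "qa n Y B"
  shows "qa n (\<lambda>t. X t * Y t) (A + B)"
proof -
  obtain C1 where C1: "C1 \<ge> 0" "\<And>t. 0 < t \<Longrightarrow> t \<le> 1 \<Longrightarrow> mn (X t - 1\<^sub>m n - complex_of_real t \<cdot>\<^sub>m A) \<le> C1 * t\<^sup>2"
    using X unfolding qa_def by blast
  obtain C2 where C2: "C2 \<ge> 0" "\<And>t. 0 < t \<Longrightarrow> t \<le> 1 \<Longrightarrow> mn (Y t - 1\<^sub>m n - complex_of_real t \<cdot>\<^sub>m B) \<le> C2 * t\<^sup>2"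
    using Y unfolding qa_def by blast
  have A: "A \<in> carrier_mat n n" and B: "B \<in> carrier_mat n n" and Xc: "\<And>t. X t \<in> carrier_mat n n"
    and Yc: "\<And>t. Y t \<in> carrier_mat n n" using X Y unfolding qa_def by auto
  let ?K = "C1 * (C2 + real n + mn B) + (1 + mn A) * C2 + mn A * mn B"
  have K: "?K \<ge> 0" using C1 C2 mn_nonneg[of A] mn_nonneg[of B] by simp
  have b: "mn (X t * Y t - 1\<^sub>m n - complex_of_real t \<cdot>\<^sub>m (A + B)) \<le> ?K * t\<^sup>2"
    if t: "0 < t" "t \<le> 1" for t
  proof -
    let ?tc = "complex_of_real t"
    define E1 where "E1 = X t - 1\<^sub>m n - ?tc \<cdot>\<^sub>m A"
    define E2 where "E2 = Y t - 1\<^sub>m n - ?tc \<cdot>\<^sub>m B"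
    have E1c: "E1 \<in> carrier_mat n n" unfolding E1_def by (rule minus_carrier_mat) (use A in simp)
    have E2c: "E2 \<in> carrier_mat n n" unfolding E2_def by (rule minus_carrier_mat) (use B in simp)
    note dims = carrier_matD[OF A] carrier_matD[OF B] carrier_matD[OF Xc[of t]] carrier_matD[OF Yc[of t]]
       carrier_matD[OF E1c] carrier_matD[OF E2c]
    have e1: "E1 * Y t = X t * Y t - Y t - ?tc \<cdot>\<^sub>m (A * Y t)"
    proof -
      have "E1 * Y t = (X t - 1\<^sub>m n) * Y t - (?tc \<cdot>\<^sub>m A) * Y t"
        unfolding E1_def by (rule minus_mult_distrib_mat[of _ n n _ _ n]) (use A Xc Yc in auto)
      also have "(X t - 1\<^sub>m n) * Y t = X t * Y t - 1\<^sub>m n * Y t"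
        by (rule minus_mult_distrib_mat[of _ n n _ _ n]) (use Xc Yc in auto)
      also have "1\<^sub>m n * Y t = Y t" by (rule left_mult_one_mat[OF Yc])
      also have "(?tc \<cdot>\<^sub>m A) * Y t = ?tc \<cdot>\<^sub>m (A * Y t)" by (rule mult_smult_assoc_mat[OF A Yc])
      finally show ?thesis .
    qed
    have e2: "A * E2 = A * Y t - A - ?tc \<cdot>\<^sub>m (A * B)"
    proof -
      have "A * E2 = A * (Y t - 1\<^sub>m n) - A * (?tc \<cdot>\<^sub>m B)"
        unfolding E2_def by (rule mult_minus_distrib_mat[of _ n n _ n]) (use A B Yc in auto)
      also have "A * (Y t - 1\<^sub>m n) = A * Y t - A * 1\<^sub>m n"
        by (rule mult_minus_distrib_mat[of _ n n _ n]) (use A Yc in auto)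
      also have "A * 1\<^sub>m n = A" by (rule right_mult_one_mat[OF A])
      also have "A * (?tc \<cdot>\<^sub>m B) = ?tc \<cdot>\<^sub>m (A * B)" by (rule mult_smult_distrib[OF A B])
      finally show ?thesis .
    qed
    have AY: "A * Y t \<in> carrier_mat n n" "A * B \<in> carrier_mat n n" "X t * Y t \<in> carrier_mat n n"
      using mult_carrier_mat[OF A Yc] mult_carrier_mat[OF A B] mult_carrier_mat[OF Xc Yc] by auto
    note dims2 = carrier_matD[OF AY(1)] carrier_matD[OF AY(2)] carrier_matD[OF AY(3)]
    have id: "X t * Y t - 1\<^sub>m n - ?tc \<cdot>\<^sub>m (A + B) = E1 * Y t + E2 + ?tc \<cdot>\<^sub>m (A * E2) + (?tc * ?tc) \<cdot>\<^sub>m (A * B)"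
      unfolding e1 e2
      by (rule eq_matI) (simp_all add: dims dims2 E2_def algebra_simps)
    have Yid: "Y t = E2 + 1\<^sub>m n + ?tc \<cdot>\<^sub>m B"
      by (rule eq_matI) (simp_all add: dims E2_def)
    have mE1: "mn E1 \<le> C1 * t\<^sup>2" unfolding E1_def by (rule C1(2)[OF t])
    have mE2: "mn E2 \<le> C2 * t\<^sup>2" unfolding E2_def by (rule C2(2)[OF t])
    have t2: "t\<^sup>2 \<le> 1" using t by (simp add: power_le_one)
    have mY: "mn (Y t) \<le> C2 + real n + mn B"
    proof -
      have "mn (Y t) \<le> mn (E2 + 1\<^sub>m n) + mn (?tc \<cdot>\<^sub>m B)"
        by (subst Yid, rule mn_add[of _ n n]) (use E2c B in auto)
      also have "\<dots> \<le> mn E2 + mn (1\<^sub>m n) + t * mn B"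
        using mn_add[OF E2c one_carrier_mat] t by (simp add: mn_smult)
      also have "\<dots> \<le> C2 + real n + mn B"
      proof -
        have "mn E2 \<le> C2" using mE2 t2 C2(1) by (meson mult_left_le order_trans)
        moreover have "t * mn B \<le> mn B" using t mn_nonneg[of B] by (simp add: mult_left_le_one_le)
        ultimately show ?thesis by (simp add: mn_one)
      qed
      finally show ?thesis .
    qed
    have "mn (X t * Y t - 1\<^sub>m n - ?tc \<cdot>\<^sub>m (A + B)) \<le>
          mn (E1 * Y t) + mn E2 + mn (?tc \<cdot>\<^sub>m (A * E2)) + mn ((?tc * ?tc) \<cdot>\<^sub>m (A * B))"
    proof -
      have c1: "E1 * Y t \<in> carrier_mat n n" "?tc \<cdot>\<^sub>m (A * E2) \<in> carrier_mat n n"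
        "(?tc * ?tc) \<cdot>\<^sub>m (A * B) \<in> carrier_mat n n" using E1c E2c A B Yc by auto
      have "mn (E1 * Y t + E2 + ?tc \<cdot>\<^sub>m (A * E2) + (?tc * ?tc) \<cdot>\<^sub>m (A * B))
          \<le> mn (E1 * Y t + E2 + ?tc \<cdot>\<^sub>m (A * E2)) + mn ((?tc * ?tc) \<cdot>\<^sub>m (A * B))"
        by (rule mn_add[of _ n n]) (use c1 E2c in auto)
      also have "mn (E1 * Y t + E2 + ?tc \<cdot>\<^sub>m (A * E2)) \<le> mn (E1 * Y t + E2) + mn (?tc \<cdot>\<^sub>m (A * E2))"
        by (rule mn_add[of _ n n]) (use c1 E2c in auto)
      also have "mn (E1 * Y t + E2) \<le> mn (E1 * Y t) + mn E2"
        by (rule mn_add[of _ n n]) (use c1 E2c in auto)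
      finally show ?thesis by (simp only: id)
    qed
    also have "\<dots> \<le> C1 * t\<^sup>2 * (C2 + real n + mn B) + C2 * t\<^sup>2 + mn A * C2 * t\<^sup>2 + t\<^sup>2 * (mn A * mn B)"
    proof -
      have a1: "mn (E1 * Y t) \<le> C1 * t\<^sup>2 * (C2 + real n + mn B)"
        using mn_mult[OF E1c Yc] mult_mono[OF mE1 mY] mn_nonneg[of E1] mn_nonneg[of "Y t"] C1(1)
        by (meson order_trans zero_le_power2 mult_nonneg_nonneg)
      have a3: "mn (?tc \<cdot>\<^sub>m (A * E2)) \<le> mn A * C2 * t\<^sup>2"
      proof -
        have "mn (?tc \<cdot>\<^sub>m (A * E2)) = t * mn (A * E2)" using t by (simp add: mn_smult)
        also have "\<dots> \<le> 1 * (mn A * mn E2)"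
          using t mn_mult[OF A E2c] mn_nonneg[of "A * E2"] by (intro mult_mono) auto
        also have "\<dots> \<le> mn A * (C2 * t\<^sup>2)" using mE2 mn_nonneg[of A] by (simp add: mult_left_mono)
        finally show ?thesis by simp
      qed
      have a4: "mn ((?tc * ?tc) \<cdot>\<^sub>m (A * B)) \<le> t\<^sup>2 * (mn A * mn B)"
      proof -
        have "mn ((?tc * ?tc) \<cdot>\<^sub>m (A * B)) = t\<^sup>2 * mn (A * B)" using t
          by (simp add: mn_smult norm_mult power2_eq_square)
        also have "\<dots> \<le> t\<^sup>2 * (mn A * mn B)" by (intro mult_left_mono mn_mult[OF A B]) auto
        finally show ?thesis .
      qed
      show ?thesis using a1 mE2 a3 a4 by linarith
    qed
    also have "\<dots> = ?K * t\<^sup>2" by (simp add: algebra_simps)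
    finally show ?thesis .
  qed
  have "\<exists>C\<ge>0. \<forall>t. 0 < t \<and> t \<le> 1 \<longrightarrow> mn (X t * Y t - 1\<^sub>m n - complex_of_real t \<cdot>\<^sub>m (A + B)) \<le> C * t\<^sup>2"
    using K b by blast
  then show ?thesis unfolding qa_def using add_carrier_mat[OF B, of A] mult_carrier_mat[OF Xc Yc] by blast
qed


lemma qa_conj: assumes X: "qa n X A" and Z: "Z \<in> carrier_mat n n" and ZZ: "Z * Z = 1\<^sub>m n"
  shows "qa n (\<lambda>t. Z * X t * Z) (Z * A * Z)"
proof -
  obtain C where C: "C \<ge> 0" "\<And>t. 0 < t \<Longrightarrow> t \<le> 1 \<Longrightarrow> mn (X t - 1\<^sub>m n - complex_of_real t \<cdot>\<^sub>m A) \<le> C * t\<^sup>2"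
    using X unfolding qa_def by blast
  have A: "A \<in> carrier_mat n n" and Xc: "\<And>t. X t \<in> carrier_mat n n" using X unfolding qa_def by auto
  let ?K = "mn Z * C * mn Z"
  have K: "?K \<ge> 0" using C(1) mn_nonneg[of Z] by simp
  have b: "mn (Z * X t * Z - 1\<^sub>m n - complex_of_real t \<cdot>\<^sub>m (Z * A * Z)) \<le> ?K * t\<^sup>2"
    if t: "0 < t" "t \<le> 1" for t
  proof -
    let ?tc = "complex_of_real t"
    define E where "E = X t - 1\<^sub>m n - ?tc \<cdot>\<^sub>m A"
    have Ec: "E \<in> carrier_mat n n" unfolding E_def by (rule minus_carrier_mat) (use A in simp)
    have e1: "Z * E = Z * X t - Z - ?tc \<cdot>\<^sub>m (Z * A)"
    proof -
      have "Z * E = Z * (X t - 1\<^sub>m n) - Z * (?tc \<cdot>\<^sub>m A)"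
        unfolding E_def by (rule mult_minus_distrib_mat[of _ n n _ n]) (use A Xc Z in auto)
      also have "Z * (X t - 1\<^sub>m n) = Z * X t - Z * 1\<^sub>m n"
        by (rule mult_minus_distrib_mat[of _ n n _ n]) (use Xc Z in auto)
      also have "Z * 1\<^sub>m n = Z" by (rule right_mult_one_mat[OF Z])
      also have "Z * (?tc \<cdot>\<^sub>m A) = ?tc \<cdot>\<^sub>m (Z * A)" by (rule mult_smult_distrib[OF Z A])
      finally show ?thesis .
    qed
    have e2: "Z * E * Z = Z * X t * Z - 1\<^sub>m n - ?tc \<cdot>\<^sub>m (Z * A * Z)"
    proof -
      have ZX: "Z * X t \<in> carrier_mat n n" "Z * A \<in> carrier_mat n n"
        using mult_carrier_mat[OF Z Xc] mult_carrier_mat[OF Z A] by auto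
      have "Z * E * Z = (Z * X t - Z) * Z - (?tc \<cdot>\<^sub>m (Z * A)) * Z"
        unfolding e1 by (rule minus_mult_distrib_mat[OF minus_carrier_mat[OF Z] smult_carrier_mat[OF ZX(2)] Z])
      also have "(Z * X t - Z) * Z = Z * X t * Z - Z * Z"
        by (rule minus_mult_distrib_mat[OF ZX(1) Z Z])
      also have "(?tc \<cdot>\<^sub>m (Z * A)) * Z = ?tc \<cdot>\<^sub>m (Z * A * Z)" by (rule mult_smult_assoc_mat[OF ZX(2) Z])
      finally show ?thesis by (simp only: ZZ)
    qed
    have "mn (Z * X t * Z - 1\<^sub>m n - ?tc \<cdot>\<^sub>m (Z * A * Z)) = mn (Z * E * Z)" by (simp only: e2)
    also have "\<dots> \<le> mn (Z * E) * mn Z" by (rule mn_mult[of _ n n]) (use Z Ec in auto)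
    also have "\<dots> \<le> (mn Z * mn E) * mn Z"
      by (intro mult_right_mono mn_mult[OF Z Ec] mn_nonneg)
    also have "\<dots> \<le> (mn Z * (C * t\<^sup>2)) * mn Z"
      using C(2)[OF t] unfolding E_def[symmetric]
      by (intro mult_right_mono mult_left_mono mn_nonneg)
    also have "\<dots> = ?K * t\<^sup>2" by (simp add: algebra_simps)
    finally show ?thesis .
  qed
  have "\<exists>C\<ge>0. \<forall>t. 0 < t \<and> t \<le> 1 \<longrightarrow> mn (Z * X t * Z - 1\<^sub>m n - complex_of_real t \<cdot>\<^sub>m (Z * A * Z)) \<le> C * t\<^sup>2"
    using K b by blast
  moreover have "Z * A * Z \<in> carrier_mat n n" using Z A by (metis mult_carrier_mat)
  moreover have "\<forall>t. Z * X t * Z \<in> carrier_mat n n" using Z Xc by (metis mult_carrier_mat)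
  ultimately show ?thesis unfolding qa_def by blast
qed

lemma step_err:
  assumes T: "qa N T AT" and E: "qa d E AE" and Emb: "Emb \<in> carrier_mat N d"
    and key: "AT * Emb = Emb * AE"
  shows "\<exists>C. \<forall>t. 0 < t \<and> t \<le> 1 \<longrightarrow> (\<forall>\<phi>\<in>carrier_vec d.
           vnorm (T t *\<^sub>v (Emb *\<^sub>v \<phi>) - Emb *\<^sub>v (E t *\<^sub>v \<phi>)) \<le> C * t\<^sup>2 * vnorm \<phi>)"
proof -
  obtain C1 where C1: "C1 \<ge> 0" "\<And>t. 0 < t \<Longrightarrow> t \<le> 1 \<Longrightarrow> mn (T t - 1\<^sub>m N - complex_of_real t \<cdot>\<^sub>m AT) \<le> C1 * t\<^sup>2"
    using T unfolding qa_def by blast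
  obtain C2 where C2: "C2 \<ge> 0" "\<And>t. 0 < t \<Longrightarrow> t \<le> 1 \<Longrightarrow> mn (E t - 1\<^sub>m d - complex_of_real t \<cdot>\<^sub>m AE) \<le> C2 * t\<^sup>2"
    using E unfolding qa_def by blast
  have AT: "AT \<in> carrier_mat N N" and Tc: "\<And>t. T t \<in> carrier_mat N N" using T unfolding qa_def by auto
  have AE: "AE \<in> carrier_mat d d" and Ec: "\<And>t. E t \<in> carrier_mat d d" using E unfolding qa_def by auto
  let ?K = "C1 * mn Emb + mn Emb * C2"
  have b: "vnorm (T t *\<^sub>v (Emb *\<^sub>v \<phi>) - Emb *\<^sub>v (E t *\<^sub>v \<phi>)) \<le> ?K * t\<^sup>2 * vnorm \<phi>"
    if t: "0 < t" "t \<le> 1" and phi: "\<phi> \<in> carrier_vec d" for t \<phi>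
  proof -
    let ?tc = "complex_of_real t"
    define R1 where "R1 = T t - 1\<^sub>m N - ?tc \<cdot>\<^sub>m AT"
    define R2 where "R2 = E t - 1\<^sub>m d - ?tc \<cdot>\<^sub>m AE"
    have R1c: "R1 \<in> carrier_mat N N" unfolding R1_def by (rule minus_carrier_mat) (use AT in simp)
    have R2c: "R2 \<in> carrier_mat d d" unfolding R2_def by (rule minus_carrier_mat) (use AE in simp)
    have e1: "R1 * Emb = T t * Emb - Emb - ?tc \<cdot>\<^sub>m (AT * Emb)"
    proof -
      have "R1 * Emb = (T t - 1\<^sub>m N) * Emb - (?tc \<cdot>\<^sub>m AT) * Emb"
        unfolding R1_def by (rule minus_mult_distrib_mat[of _ N N _ _ d]) (use AT Tc Emb in auto)
      also have "(T t - 1\<^sub>m N) * Emb = T t * Emb - 1\<^sub>m N * Emb"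
        by (rule minus_mult_distrib_mat[of _ N N _ _ d]) (use Tc Emb in auto)
      also have "1\<^sub>m N * Emb = Emb" by (rule left_mult_one_mat[OF Emb])
      also have "(?tc \<cdot>\<^sub>m AT) * Emb = ?tc \<cdot>\<^sub>m (AT * Emb)" by (rule mult_smult_assoc_mat[OF AT Emb])
      finally show ?thesis .
    qed
    have e2: "Emb * R2 = Emb * E t - Emb - ?tc \<cdot>\<^sub>m (Emb * AE)"
    proof -
      have "Emb * R2 = Emb * (E t - 1\<^sub>m d) - Emb * (?tc \<cdot>\<^sub>m AE)"
        unfolding R2_def by (rule mult_minus_distrib_mat[of _ N d _ d]) (use AE Ec Emb in auto)
      also have "Emb * (E t - 1\<^sub>m d) = Emb * E t - Emb * 1\<^sub>m d"
        by (rule mult_minus_distrib_mat[of _ N d _ d]) (use Ec Emb in auto)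
      also have "Emb * 1\<^sub>m d = Emb" by (rule right_mult_one_mat[OF Emb])
      also have "Emb * (?tc \<cdot>\<^sub>m AE) = ?tc \<cdot>\<^sub>m (Emb * AE)" by (rule mult_smult_distrib[OF Emb AE])
      finally show ?thesis .
    qed
    have c: "T t * Emb \<in> carrier_mat N d" "Emb * E t \<in> carrier_mat N d" "Emb * AE \<in> carrier_mat N d"
      using mult_carrier_mat[OF Tc Emb] mult_carrier_mat[OF Emb Ec] mult_carrier_mat[OF Emb AE] by auto
    note dims = carrier_matD[OF c(1)] carrier_matD[OF c(2)] carrier_matD[OF c(3)] carrier_matD[OF Emb]
      carrier_matD[OF AE] carrier_matD[OF Ec[of t]] carrier_matD[OF Tc[of t]] carrier_matD[OF AT]
    have id: "T t * Emb - Emb * E t = R1 * Emb - Emb * R2"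
      unfolding e1 e2 key by (rule eq_matI) (simp_all add: dims)
    have RR: "R1 * Emb \<in> carrier_mat N d" "Emb * R2 \<in> carrier_mat N d"
      using mult_carrier_mat[OF R1c Emb] mult_carrier_mat[OF Emb R2c] by auto
    have "mn (T t * Emb - Emb * E t) \<le> mn (R1 * Emb) + mn (Emb * R2)"
      unfolding id by (rule mn_minus[OF RR])
    also have "\<dots> \<le> mn R1 * mn Emb + mn Emb * mn R2"
      by (intro add_mono mn_mult[OF R1c Emb] mn_mult[OF Emb R2c])
    also have "\<dots> \<le> C1 * t\<^sup>2 * mn Emb + mn Emb * (C2 * t\<^sup>2)"
      using C1(2)[OF t] C2(2)[OF t] unfolding R1_def[symmetric] R2_def[symmetric]
      by (intro add_mono mult_right_mono mult_left_mono mn_nonneg)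
    also have "\<dots> = ?K * t\<^sup>2" by (simp add: algebra_simps)
    finally have m: "mn (T t * Emb - Emb * E t) \<le> ?K * t\<^sup>2" .
    have v: "(T t * Emb - Emb * E t) *\<^sub>v \<phi> = T t *\<^sub>v (Emb *\<^sub>v \<phi>) - Emb *\<^sub>v (E t *\<^sub>v \<phi>)"
      using c Tc Emb Ec phi by (simp add: minus_mult_distrib_mat_vec[of _ N d] assoc_mult_mat_vec[OF Tc Emb phi] assoc_mult_mat_vec[OF Emb Ec phi])
    have "vnorm (T t *\<^sub>v (Emb *\<^sub>v \<phi>) - Emb *\<^sub>v (E t *\<^sub>v \<phi>)) \<le> mn (T t * Emb - Emb * E t) * vnorm \<phi>"
      unfolding v[symmetric] by (rule vnorm_mult[OF minus_carrier_mat[OF c(2)] phi])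
    also have "\<dots> \<le> ?K * t\<^sup>2 * vnorm \<phi>" by (intro mult_right_mono m vnorm_nonneg)
    finally show ?thesis .
  qed
  then show ?thesis by blast
qed

lemma telescope:
  assumes Tc: "T \<in> carrier_mat N N" and Tu: "\<And>v. v \<in> carrier_vec N \<Longrightarrow> vnorm (T *\<^sub>v v) = vnorm v"
    and Ec: "E \<in> carrier_mat d d" and Eu: "\<And>v. v \<in> carrier_vec d \<Longrightarrow> vnorm (E *\<^sub>v v) = vnorm v"
    and Emb: "Emb \<in> carrier_mat N d"
    and err: "\<And>\<phi>. \<phi> \<in> carrier_vec d \<Longrightarrow> vnorm (T *\<^sub>v (Emb *\<^sub>v \<phi>) - Emb *\<^sub>v (E *\<^sub>v \<phi>)) \<le> eta * vnorm \<phi>"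
    and psi: "\<psi> \<in> carrier_vec d"
  shows "vnorm (((\<lambda>v. T *\<^sub>v v) ^^ k) (Emb *\<^sub>v \<psi>) - Emb *\<^sub>v (((\<lambda>v. E *\<^sub>v v) ^^ k) \<psi>)) \<le> real k * eta * vnorm \<psi>"
proof (induction k)
  case 0
  have "Emb *\<^sub>v \<psi> - Emb *\<^sub>v \<psi> = 0\<^sub>v N" using Emb psi by auto
  then show ?case by (simp add: vnorm_def)
next
  case (Suc k)
  define x where "x = ((\<lambda>v. T *\<^sub>v v) ^^ k) (Emb *\<^sub>v \<psi>)"
  define p where "p = ((\<lambda>v. E *\<^sub>v v) ^^ k) \<psi>"
  have xc: "x \<in> carrier_vec N" unfolding x_def by (induction k) (use Tc Emb psi in auto)
  have pc: "p \<in> carrier_vec d" unfolding p_def by (induction k) (use Ec psi in auto)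
  have pn: "vnorm p = vnorm \<psi>" unfolding p_def
  proof (induction k)
    case 0 then show ?case by simp
  next
    case (Suc k)
    have "((\<lambda>v. E *\<^sub>v v) ^^ k) \<psi> \<in> carrier_vec d" by (induction k) (use Ec psi in auto)
    then show ?case using Suc Eu by simp
  qed
  have ep: "Emb *\<^sub>v p \<in> carrier_vec N" using Emb pc by auto
  have id: "T *\<^sub>v x - Emb *\<^sub>v (E *\<^sub>v p) = T *\<^sub>v (x - Emb *\<^sub>v p) + (T *\<^sub>v (Emb *\<^sub>v p) - Emb *\<^sub>v (E *\<^sub>v p))"
  proof -
    have "T *\<^sub>v (x - Emb *\<^sub>v p) = T *\<^sub>v x - T *\<^sub>v (Emb *\<^sub>v p)"
      by (rule mult_minus_distrib_mat_vec[OF Tc xc ep])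
    moreover have "T *\<^sub>v x \<in> carrier_vec N" "T *\<^sub>v (Emb *\<^sub>v p) \<in> carrier_vec N" "Emb *\<^sub>v (E *\<^sub>v p) \<in> carrier_vec N"
      using Tc xc ep Emb Ec pc by auto
    ultimately show ?thesis using Emb
      by (intro eq_vecI) (auto simp: carrier_matD[OF Tc] carrier_matD[OF Emb] carrier_vecD[OF xc] carrier_vecD[OF ep] carrier_matD[OF Ec])
  qed
  have "vnorm (((\<lambda>v. T *\<^sub>v v) ^^ Suc k) (Emb *\<^sub>v \<psi>) - Emb *\<^sub>v (((\<lambda>v. E *\<^sub>v v) ^^ Suc k) \<psi>))
      = vnorm (T *\<^sub>v x - Emb *\<^sub>v (E *\<^sub>v p))" by (simp add: x_def p_def)
  also have "\<dots> \<le> vnorm (T *\<^sub>v (x - Emb *\<^sub>v p)) + vnorm (T *\<^sub>v (Emb *\<^sub>v p) - Emb *\<^sub>v (E *\<^sub>v p))"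
    unfolding id by (rule vnorm_add[of _ N]) (use Tc xc ep Emb Ec pc in auto)
  also have "vnorm (T *\<^sub>v (x - Emb *\<^sub>v p)) = vnorm (x - Emb *\<^sub>v p)" using xc ep by (intro Tu) auto
  also have "\<dots> \<le> real k * eta * vnorm \<psi>" using Suc by (simp add: x_def p_def)
  also have "vnorm (T *\<^sub>v (Emb *\<^sub>v p) - Emb *\<^sub>v (E *\<^sub>v p)) \<le> eta * vnorm \<psi>"
    using err[OF pc] pn by simp
  finally show ?case by (simp add: algebra_simps)
qed


lemma qa_evol_gen: assumes H: "hermitian_mat n H" and r: "0 < r" "r \<le> 1"
  shows "qa n (\<lambda>t. evol H (r * t)) ((- \<i> * complex_of_real r) \<cdot>\<^sub>m H)"
proof -
  have A: "H \<in> carrier_mat n n" using H by (simp add: hermitian_mat_def)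
  let ?K = "real n ^ 3 * exp (mn H)"
  have K: "?K \<ge> 0" by simp
  have b: "mn (evol H (r * t) - 1\<^sub>m n - complex_of_real t \<cdot>\<^sub>m ((- \<i> * complex_of_real r) \<cdot>\<^sub>m H)) \<le> ?K * t\<^sup>2"
    if t: "0 < t" "t \<le> 1" for t
  proof -
    let ?c = "- \<i> * complex_of_real (r * t)"
    have c: "complex_of_real t \<cdot>\<^sub>m ((- \<i> * complex_of_real r) \<cdot>\<^sub>m H) = ?c \<cdot>\<^sub>m H"
      by (simp add: smult_smult_mat algebra_simps)
    have cm: "cmod ?c = r * t" using t r by (simp add: norm_mult)
    have rt: "r * t \<le> 1" using r t by (simp add: mult_le_one)
    have "mn (evol H (r * t) - 1\<^sub>m n - complex_of_real t \<cdot>\<^sub>m ((- \<i> * complex_of_real r) \<cdot>\<^sub>m H))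
        = mn (mexp (?c \<cdot>\<^sub>m H) - 1\<^sub>m n - ?c \<cdot>\<^sub>m H)" by (simp only: c evol_def)
    also have "\<dots> \<le> (cmod ?c)\<^sup>2 * ?K" by (rule mexp_quad[OF A]) (use cm rt in simp)
    also have "(cmod ?c)\<^sup>2 = r\<^sup>2 * t\<^sup>2" using cm by (simp add: power_mult_distrib)
    also have "r\<^sup>2 * t\<^sup>2 * ?K \<le> 1 * t\<^sup>2 * ?K" using r K
      by (intro mult_right_mono) (auto simp: power_le_one)
    finally show ?thesis by (simp add: mult.commute)
  qed
  have "\<exists>C\<ge>0. \<forall>t. 0 < t \<and> t \<le> 1 \<longrightarrow> mn (evol H (r * t) - 1\<^sub>m n - complex_of_real t \<cdot>\<^sub>m ((- \<i> * complex_of_real r) \<cdot>\<^sub>m H)) \<le> C * t\<^sup>2"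
    using K b by blast
  then show ?thesis unfolding qa_def using A evol_carrier[OF A] smult_carrier_mat[OF A] by blast
qed

lemma kron_dims[simp]: "dim_row (kron A B) = dim_row A * dim_row B" "dim_col (kron A B) = dim_col A * dim_col B"
  by (simp_all add: kron_def)

lemma kron_carrier: "A \<in> carrier_mat m m \<Longrightarrow> B \<in> carrier_mat k k \<Longrightarrow> kron A B \<in> carrier_mat (m * k) (m * k)"
  by (metis carrier_matD(1,2) carrier_matI kron_dims)

lemma kron_index: assumes "A \<in> carrier_mat m m" "B \<in> carrier_mat k k" "i < m * k" "j < m * k"
  shows "kron A B $$ (i,j) = A $$ (i div k, j div k) * B $$ (i mod k, j mod k)"
  using assms by (simp add: kron_def)

definition dmat :: "nat \<Rightarrow> (nat \<Rightarrow> complex) \<Rightarrow> complex mat" where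
  "dmat n f = mat n n (\<lambda>(i,j). if i = j then f i else 0)"

lemma dmat_carrier[simp]: "dmat n f \<in> carrier_mat n n" by (simp add: dmat_def)
lemma dmat_dims[simp]: "dim_row (dmat n f) = n" "dim_col (dmat n f) = n" by (simp_all add: dmat_def)
lemma dmat_index[simp]: "i < n \<Longrightarrow> j < n \<Longrightarrow> dmat n f $$ (i,j) = (if i = j then f i else 0)"
  by (simp add: dmat_def)

lemma one_dmat: "1\<^sub>m n = dmat n (\<lambda>_. 1)"
  by (rule eq_matI) auto

lemma div_mod_eq_iff: "(k::nat) > 0 \<Longrightarrow> (i = j) \<longleftrightarrow> (i div k = j div k \<and> i mod k = j mod k)"
  by (metis div_mult_mod_eq)

lemma kron_dmat: assumes k: "k > 0"
  shows "kron (dmat m f) (dmat k g) = dmat (m * k) (\<lambda>p. f (p div k) * g (p mod k))"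
proof (rule eq_matI)
  fix i j assume "i < dim_row (dmat (m * k) (\<lambda>p. f (p div k) * g (p mod k)))"
     "j < dim_col (dmat (m * k) (\<lambda>p. f (p div k) * g (p mod k)))"
  then have i: "i < m * k" and j: "j < m * k" by auto
  have id: "i div k < m" "j div k < m" using i j by (auto simp: less_mult_imp_div_less)
  have im: "i mod k < k" "j mod k < k" using k by auto
  show "kron (dmat m f) (dmat k g) $$ (i,j) = dmat (m * k) (\<lambda>p. f (p div k) * g (p mod k)) $$ (i,j)"
    using i j id im div_mod_eq_iff[OF k, of i j] by (simp add: kron_index[OF dmat_carrier dmat_carrier])
qed auto

lemma dmat_mult: "dmat n f * dmat n g = dmat n (\<lambda>i. f i * g i)"
proof (rule eq_matI)
  fix i j assume "i < dim_row (dmat n (\<lambda>i. f i * g i))" "j < dim_col (dmat n (\<lambda>i. f i * g i))"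
  then have i: "i < n" and j: "j < n" by auto
  have "(dmat n f * dmat n g) $$ (i,j) = (\<Sum>l<n. dmat n f $$ (i,l) * dmat n g $$ (l,j))"
    by (rule mult_index_sum[of _ n n _ n]) (use i j in auto)
  also have "\<dots> = (\<Sum>l<n. if l = i then (if i = j then f i * g i else 0) else 0)"
    by (intro sum.cong refl) (use i j in auto)
  also have "\<dots> = dmat n (\<lambda>i. f i * g i) $$ (i,j)" using i j by simp
  finally show "(dmat n f * dmat n g) $$ (i,j) = dmat n (\<lambda>i. f i * g i) $$ (i,j)" .
qed auto

lemma dmat_left_index: assumes A: "A \<in> carrier_mat n n" and i: "i < n" and j: "j < n"
  shows "(dmat n f * A) $$ (i,j) = f i * A $$ (i,j)"
proof -
  have "(dmat n f * A) $$ (i,j) = (\<Sum>l<n. dmat n f $$ (i,l) * A $$ (l,j))"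
    by (rule mult_index_sum[of _ n n _ n]) (use A i j in auto)
  also have "\<dots> = (\<Sum>l<n. if l = i then f i * A $$ (i,j) else 0)"
    by (intro sum.cong refl) (use i j in auto)
  finally show ?thesis using i by simp
qed

lemma dmat_right_index: assumes A: "A \<in> carrier_mat n n" and i: "i < n" and j: "j < n"
  shows "(A * dmat n f) $$ (i,j) = A $$ (i,j) * f j"
proof -
  have "(A * dmat n f) $$ (i,j) = (\<Sum>l<n. A $$ (i,l) * dmat n f $$ (l,j))"
    by (rule mult_index_sum[of _ n n _ n]) (use A i j in auto)
  also have "\<dots> = (\<Sum>l<n. if l = j then A $$ (i,j) * f j else 0)"
    by (intro sum.cong refl) (use i j in auto)
  finally show ?thesis using j by simp
qed

lemma dmat_conj_index: assumes A: "A \<in> carrier_mat n n" and i: "i < n" and j: "j < n"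
  shows "(dmat n f * A * dmat n f) $$ (i,j) = f i * A $$ (i,j) * f j"
  using dmat_right_index[OF mult_carrier_mat[OF dmat_carrier A] i j] dmat_left_index[OF A i j] by simp

lemma dmat_adj: "mat_adjoint (dmat n f) = dmat n (\<lambda>i. cnj (f i))"
  by (rule eq_matI) auto

lemma dmat_unitary: assumes "\<And>i. i < n \<Longrightarrow> cnj (f i) * f i = 1"
  shows "unitary_mat n (dmat n f)"
  unfolding unitary_mat_def dmat_adj dmat_mult using assms by (auto simp: one_dmat intro!: eq_matI)

lemma dmat_sq: assumes "\<And>i. i < n \<Longrightarrow> f i * f i = 1"
  shows "dmat n f * dmat n f = 1\<^sub>m n"
  unfolding dmat_mult using assms by (auto simp: one_dmat intro!: eq_matI)

definition pmat :: "nat \<Rightarrow> (nat \<Rightarrow> nat) \<Rightarrow> complex mat" where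
  "pmat n p = mat n n (\<lambda>(i,j). if j = p i then 1 else 0)"

lemma pmat_carrier[simp]: "pmat n p \<in> carrier_mat n n" by (simp add: pmat_def)
lemma pmat_dims[simp]: "dim_row (pmat n p) = n" "dim_col (pmat n p) = n" by (simp_all add: pmat_def)
lemma pmat_index[simp]: "i < n \<Longrightarrow> j < n \<Longrightarrow> pmat n p $$ (i,j) = (if j = p i then 1 else 0)"
  by (simp add: pmat_def)

lemma pmat_mult_vec: assumes v: "v \<in> carrier_vec n" and p: "\<And>i. i < n \<Longrightarrow> p i < n"
  shows "pmat n p *\<^sub>v v = vec n (\<lambda>i. v $ p i)"
proof (rule eq_vecI)
  fix i assume "i < dim_vec (vec n (\<lambda>i. v $ p i))"
  then have i: "i < n" by simp
  have "(pmat n p *\<^sub>v v) $ i = (\<Sum>l<n. pmat n p $$ (i,l) * v $ l)"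
    by (rule mult_vec_index_sum) (use v i in auto)
  also have "\<dots> = (\<Sum>l<n. if l = p i then v $ p i else 0)"
    by (intro sum.cong refl) (use i in auto)
  also have "\<dots> = v $ p i" using p[OF i] by simp
  finally show "(pmat n p *\<^sub>v v) $ i = vec n (\<lambda>i. v $ p i) $ i" using i by simp
qed simp

lemma pmat_mult: assumes p: "\<And>i. i < n \<Longrightarrow> p i < n" and q: "\<And>i. i < n \<Longrightarrow> q i < n"
  shows "pmat n p * pmat n q = pmat n (\<lambda>i. q (p i))"
proof (rule eq_matI)
  fix i j assume "i < dim_row (pmat n (\<lambda>i. q (p i)))" "j < dim_col (pmat n (\<lambda>i. q (p i)))"
  then have i: "i < n" and j: "j < n" by auto
  have "(pmat n p * pmat n q) $$ (i,j) = (\<Sum>l<n. pmat n p $$ (i,l) * pmat n q $$ (l,j))"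
    by (rule mult_index_sum[of _ n n _ n]) (use i j in auto)
  also have "\<dots> = (\<Sum>l<n. if l = p i then (if j = q (p i) then 1 else 0) else 0)"
    by (intro sum.cong refl) (use i j in auto)
  also have "\<dots> = pmat n (\<lambda>i. q (p i)) $$ (i,j)" using i j p[OF i] by simp
  finally show "(pmat n p * pmat n q) $$ (i,j) = pmat n (\<lambda>i. q (p i)) $$ (i,j)" .
qed auto

lemma pmat_id: "pmat n (\<lambda>i. i) = 1\<^sub>m n"
  by (rule eq_matI) auto

lemma pmat_adj: assumes p: "\<And>i. i < n \<Longrightarrow> p i < n" and inv: "\<And>i. i < n \<Longrightarrow> p (p i) = i"
  shows "mat_adjoint (pmat n p) = pmat n p"
proof (rule eq_matI)
  fix i j assume "i < dim_row (pmat n p)" "j < dim_col (pmat n p)"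
  then have i: "i < n" and j: "j < n" by auto
  show "mat_adjoint (pmat n p) $$ (i,j) = pmat n p $$ (i,j)"
    using i j p inv by auto
qed auto

lemma pmat_sq: assumes p: "\<And>i. i < n \<Longrightarrow> p i < n" and inv: "\<And>i. i < n \<Longrightarrow> p (p i) = i"
  shows "pmat n p * pmat n p = 1\<^sub>m n"
proof -
  have "pmat n p * pmat n p = pmat n (\<lambda>i. p (p i))" by (rule pmat_mult[OF p p])
  also have "\<dots> = pmat n (\<lambda>i. i)" by (rule eq_matI) (use inv in auto)
  finally show ?thesis by (simp add: pmat_id)
qed

lemma pmat_unitary: assumes p: "\<And>i. i < n \<Longrightarrow> p i < n" and inv: "\<And>i. i < n \<Longrightarrow> p (p i) = i"
  shows "unitary_mat n (pmat n p)"
  using pmat_adj[OF p inv] pmat_sq[OF p inv] by (simp add: unitary_mat_def)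

lemma kron_pmat: assumes k: "k > 0" and pa: "\<And>i. i < m \<Longrightarrow> pa i < m" and pb: "\<And>i. i < k \<Longrightarrow> pb i < k"
  shows "kron (pmat m pa) (pmat k pb) = pmat (m * k) (\<lambda>i. pa (i div k) * k + pb (i mod k))"
proof (rule eq_matI)
  fix i j assume "i < dim_row (pmat (m * k) (\<lambda>i. pa (i div k) * k + pb (i mod k)))"
     "j < dim_col (pmat (m * k) (\<lambda>i. pa (i div k) * k + pb (i mod k)))"
  then have i: "i < m * k" and j: "j < m * k" by auto
  have id: "i div k < m" "j div k < m" using i j by (auto simp: less_mult_imp_div_less)
  have im: "i mod k < k" "j mod k < k" using k by auto
  have e: "(j = pa (i div k) * k + pb (i mod k)) \<longleftrightarrow> (j div k = pa (i div k) \<and> j mod k = pb (i mod k))"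
    using div_mod_eq_iff[OF k, of j "pa (i div k) * k + pb (i mod k)"] pb[OF im(1)] k by simp
  show "kron (pmat m pa) (pmat k pb) $$ (i,j) = pmat (m * k) (\<lambda>i. pa (i div k) * k + pb (i mod k)) $$ (i,j)"
    using i j id im e by (simp add: kron_index[OF pmat_carrier pmat_carrier])
qed auto

lemma msum_carrier: "(\<And>x. x \<in> set xs \<Longrightarrow> x \<in> carrier_mat n n) \<Longrightarrow> msum n xs \<in> carrier_mat n n"
  unfolding msum_def by (induction xs) auto

lemma msum_index: "(\<And>x. x \<in> set xs \<Longrightarrow> x \<in> carrier_mat n n) \<Longrightarrow> i < n \<Longrightarrow> j < n \<Longrightarrow>
   msum n xs $$ (i,j) = (\<Sum>x\<leftarrow>xs. x $$ (i,j))"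
proof (induction xs)
  case Nil then show ?case by (simp add: msum_def)
next
  case (Cons x xs)
  have c: "msum n xs \<in> carrier_mat n n" using Cons by (intro msum_carrier) auto
  have "msum n (x # xs) = x + msum n xs" by (simp add: msum_def)
  then show ?case using Cons c by simp
qed

lemma unitary_vnorm: "unitary_mat n U \<Longrightarrow> v \<in> carrier_vec n \<Longrightarrow> vnorm (U *\<^sub>v v) = vnorm v"
  unfolding unitary_mat_def by (intro vnorm_unitary) auto

lemma kron_one: "kron (1\<^sub>m m) (1\<^sub>m k) = 1\<^sub>m (m * k)"
  if "k > 0" using kron_dmat[OF that, of m "\<lambda>_. 1" "\<lambda>_. 1"] by (simp add: one_dmat)


lemma dm_div: "(x::nat) < k \<Longrightarrow> (a * k + x) div k = a" by simp
lemma dm_mod: "(x::nat) < k \<Longrightarrow> (a * k + x) mod k = x" by simp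
lemma lt_mult_add: "(a::nat) < m \<Longrightarrow> b < k \<Longrightarrow> a * k + b < m * k"
proof -
  assume a: "a < m" and b: "b < k"
  have "a * k + b < a * k + k" using b by simp
  also have "\<dots> = Suc a * k" by simp
  also have "\<dots> \<le> m * k" using a by (intro mult_le_mono1) simp
  finally show ?thesis .
qed
lemma div_lt: "(p::nat) < m * k \<Longrightarrow> p div k < m"
  by (simp add: less_mult_imp_div_less)
lemma mod_lt: "(p::nat) < m * k \<Longrightarrow> p mod k < k"
  by (metis mod_less_divisor mult_0_right neq0_conv not_less0)

locale qsim =
  fixes dA dB dA' dB' :: nat
  assumes dA': "1 \<le> dA'" "dA' \<le> dA" and dB': "1 \<le> dB'" "dB' \<le> dB"
begin

abbreviation "wA \<equiv> dA * dA'"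
abbreviation "wB \<equiv> dB * dB'"
abbreviation "NN \<equiv> wA * wB"
abbreviation "dd \<equiv> dA' * dB'"

definition cA :: "nat \<Rightarrow> nat" where "cA p = p div wB div dA'"
definition cX :: "nat \<Rightarrow> nat" where "cX p = p div wB mod dA'"
definition cB :: "nat \<Rightarrow> nat" where "cB p = p mod wB div dB'"
definition cY :: "nat \<Rightarrow> nat" where "cY p = p mod wB mod dB'"
definition idx :: "nat \<Rightarrow> nat \<Rightarrow> nat \<Rightarrow> nat \<Rightarrow> nat" where
  "idx a x b y = (a * dA' + x) * wB + (b * dB' + y)"

lemma pos: "dA > 0" "dB > 0" "dA' > 0" "dB' > 0" "wB > 0" "wA > 0"
  using dA' dB' by auto

lemma coord_bounds: assumes "p < NN" shows "cA p < dA" "cX p < dA'" "cB p < dB" "cY p < dB'"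
proof -
  have a: "p div wB < wA" using assms by (rule div_lt)
  have b: "p mod wB < wB" using pos by simp
  show "cA p < dA" unfolding cA_def using a by (rule div_lt)
  show "cX p < dA'" unfolding cX_def using pos by simp
  show "cB p < dB" unfolding cB_def using b by (rule div_lt)
  show "cY p < dB'" unfolding cY_def using pos by simp
qed

lemma coord_recon: "idx (cA p) (cX p) (cB p) (cY p) = p"
proof -
  have "(p div wB div dA' * dA' + p div wB mod dA') = p div wB" by (rule div_mult_mod_eq)
  moreover have "(p mod wB div dB' * dB' + p mod wB mod dB') = p mod wB" by (rule div_mult_mod_eq)
  ultimately show ?thesis unfolding idx_def cA_def cX_def cB_def cY_def by (metis div_mult_mod_eq)
qed

lemma idx_bound: "a < dA \<Longrightarrow> x < dA' \<Longrightarrow> b < dB \<Longrightarrow> y < dB' \<Longrightarrow> idx a x b y < NN"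
  unfolding idx_def by (intro lt_mult_add) (auto intro: lt_mult_add simp: mult.commute)

lemma coord_idx: assumes "x < dA'" "b < dB" "y < dB'"
  shows "cA (idx a x b y) = a" "cX (idx a x b y) = x" "cB (idx a x b y) = b" "cY (idx a x b y) = y"
proof -
  have bb: "b * dB' + y < wB" using assms by (metis lt_mult_add mult.commute)
  have d1: "idx a x b y div wB = a * dA' + x" unfolding idx_def by (rule dm_div[OF bb])
  have m1: "idx a x b y mod wB = b * dB' + y" unfolding idx_def by (rule dm_mod[OF bb])
  show "cA (idx a x b y) = a" unfolding cA_def d1 using assms by simp
  show "cX (idx a x b y) = x" unfolding cX_def d1 using assms by simp
  show "cB (idx a x b y) = b" unfolding cB_def m1 using assms by simp
  show "cY (idx a x b y) = y" unfolding cY_def m1 using assms by simp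
qed

lemma coord_eq: "p = q \<longleftrightarrow> (cA p = cA q \<and> cX p = cX q \<and> cB p = cB q \<and> cY p = cY q)"
  by (metis coord_recon)

end


locale qsim2 = qsim +
  fixes Ts :: "(complex mat \<times> complex mat) list"
  assumes Ts: "\<forall>(J, K)\<in>set Ts. J \<in> carrier_mat dA dA \<and> K \<in> carrier_mat dB dB"
  assumes herm: "hermitian_mat (dA * dB) (msum (dA * dB) (map (\<lambda>(J, K). kron J K) Ts))"
begin

definition "Hs = msum (dA * dB) (map (\<lambda>(J, K). kron J K) Ts)"
definition "Hp = msum (dA' * dB') (map (\<lambda>(J, K). kron (compress dA' J) (compress dB' K)) Ts)"
definition "Hb = ext_ham dA dA' 1 dB dB' 1 Hs"

lemma Ts': "T \<in> set Ts \<Longrightarrow> fst T \<in> carrier_mat dA dA \<and> snd T \<in> carrier_mat dB dB"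
  using Ts by auto

lemma Hs_herm: "hermitian_mat (dA * dB) Hs" using herm by (simp add: Hs_def)

lemma Hs_carrier: "Hs \<in> carrier_mat (dA * dB) (dA * dB)"
  using Hs_herm by (simp add: hermitian_mat_def)

lemma compress_carrier: "compress m J \<in> carrier_mat m m" by (simp add: compress_def)
lemma compress_index: "i < m \<Longrightarrow> j < m \<Longrightarrow> compress m J $$ (i,j) = J $$ (i,j)" by (simp add: compress_def)

lemma Hs_entry: assumes "a1 < dA" "a2 < dA" "b1 < dB" "b2 < dB"
  shows "Hs $$ (a1 * dB + b1, a2 * dB + b2) = (\<Sum>T\<leftarrow>Ts. fst T $$ (a1, a2) * snd T $$ (b1, b2))"
proof -
  have i: "a1 * dB + b1 < dA * dB" "a2 * dB + b2 < dA * dB" using assms by (auto intro: lt_mult_add)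
  have c: "\<And>x. x \<in> set (map (\<lambda>(J, K). kron J K) Ts) \<Longrightarrow> x \<in> carrier_mat (dA * dB) (dA * dB)"
    using Ts' by (auto intro!: kron_carrier)
  have "Hs $$ (a1 * dB + b1, a2 * dB + b2) = (\<Sum>x\<leftarrow>map (\<lambda>(J, K). kron J K) Ts. x $$ (a1 * dB + b1, a2 * dB + b2))"
    unfolding Hs_def by (rule msum_index[OF c i])
  also have "\<dots> = (\<Sum>T\<leftarrow>Ts. kron (fst T) (snd T) $$ (a1 * dB + b1, a2 * dB + b2))"
    by (simp add: case_prod_beta comp_def)
  also have "\<dots> = (\<Sum>T\<leftarrow>Ts. fst T $$ (a1, a2) * snd T $$ (b1, b2))"
  proof (rule arg_cong[where f=sum_list], rule map_cong[OF refl])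
    fix T assume "T \<in> set Ts"
    then have "fst T \<in> carrier_mat dA dA" "snd T \<in> carrier_mat dB dB" using Ts' by auto
    then show "kron (fst T) (snd T) $$ (a1 * dB + b1, a2 * dB + b2) = fst T $$ (a1, a2) * snd T $$ (b1, b2)"
      using kron_index i assms by simp
  qed
  finally show ?thesis .
qed

definition rr :: "nat \<Rightarrow> nat" where "rr q = q div dB' * dB + q mod dB'"

lemma rr_bound: "q < dd \<Longrightarrow> rr q < dA * dB"
proof -
  assume q: "q < dd"
  have "q div dB' < dA'" using q by (rule div_lt)
  then have "q div dB' < dA" using dA' by simp
  moreover have "q mod dB' < dB" using pos dB' by (meson less_le_trans mod_less_divisor)
  ultimately show ?thesis unfolding rr_def by (rule lt_mult_add)
qed

lemma Hp_entry: assumes q1: "q1 < dd" and q2: "q2 < dd"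
  shows "Hp $$ (q1, q2) = Hs $$ (rr q1, rr q2)"
proof -
  have c: "\<And>x. x \<in> set (map (\<lambda>(J, K). kron (compress dA' J) (compress dB' K)) Ts) \<Longrightarrow> x \<in> carrier_mat dd dd"
    by (auto intro!: kron_carrier compress_carrier)
  have d1: "q1 div dB' < dA'" "q2 div dB' < dA'" using q1 q2 by (auto intro: div_lt)
  have m1: "q1 mod dB' < dB'" "q2 mod dB' < dB'" using pos by auto
  have "Hp $$ (q1, q2) = (\<Sum>x\<leftarrow>map (\<lambda>(J, K). kron (compress dA' J) (compress dB' K)) Ts. x $$ (q1, q2))"
    unfolding Hp_def by (rule msum_index[OF c q1 q2])
  also have "\<dots> = (\<Sum>T\<leftarrow>Ts. kron (compress dA' (fst T)) (compress dB' (snd T)) $$ (q1, q2))"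
    by (simp add: case_prod_beta comp_def)
  also have "\<dots> = (\<Sum>T\<leftarrow>Ts. fst T $$ (q1 div dB', q2 div dB') * snd T $$ (q1 mod dB', q2 mod dB'))"
  proof (rule arg_cong[where f=sum_list], rule map_cong[OF refl])
    fix T assume "T \<in> set Ts"
    show "kron (compress dA' (fst T)) (compress dB' (snd T)) $$ (q1, q2) = fst T $$ (q1 div dB', q2 div dB') * snd T $$ (q1 mod dB', q2 mod dB')"
      using kron_index[OF compress_carrier compress_carrier q1 q2] d1 m1 by (simp add: compress_index)
  qed
  also have "\<dots> = Hs $$ (rr q1, rr q2)"
  proof -
    have "q1 mod dB' < dB" "q2 mod dB' < dB" using less_le_trans[OF m1(1) dB'(2)] less_le_trans[OF m1(2) dB'(2)] by auto
    moreover have "q1 div dB' < dA" "q2 div dB' < dA" using d1 dA' by auto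
    ultimately show ?thesis unfolding rr_def by (intro Hs_entry[symmetric])
  qed
  finally show ?thesis .
qed

lemma Hp_carrier: "Hp \<in> carrier_mat dd dd"
  unfolding Hp_def by (rule msum_carrier) (auto intro!: kron_carrier compress_carrier)

lemma Hp_herm: "hermitian_mat dd Hp"
proof -
  have "mat_adjoint Hp = Hp"
  proof (rule eq_matI)
    fix i j assume "i < dim_row Hp" "j < dim_col Hp"
    then have i: "i < dd" and j: "j < dd" using Hp_carrier by auto
    have "mat_adjoint Hp $$ (i,j) = cnj (Hp $$ (j,i))" using i j Hp_carrier by simp
    also have "\<dots> = cnj (Hs $$ (rr j, rr i))" using Hp_entry[OF j i] by simp
    also have "\<dots> = Hs $$ (rr i, rr j)" by (rule herm_entry[OF Hs_herm rr_bound[OF i] rr_bound[OF j]])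
    also have "\<dots> = Hp $$ (i,j)" using Hp_entry[OF i j] by simp
    finally show "mat_adjoint Hp $$ (i,j) = Hp $$ (i,j)" .
  qed (use Hp_carrier in auto)
  then show ?thesis using Hp_carrier by (simp add: hermitian_mat_def)
qed

lemma Hb_carrier: "Hb \<in> carrier_mat NN NN"
  by (simp add: Hb_def ext_ham_def Let_def wsA_def)

lemma Hb_entry: assumes p: "p < NN" and q: "q < NN"
  shows "Hb $$ (p, q) = (if cX p = cX q \<and> cY p = cY q then Hs $$ (cA p * dB + cB p, cA q * dB + cB q) else 0)"
  using p q by (simp add: Hb_def ext_ham_def Let_def wsA_def ws_dec_def cA_def cX_def cB_def cY_def)

lemma cAB_bound: "p < NN \<Longrightarrow> cA p * dB + cB p < dA * dB"
  using coord_bounds by (auto intro: lt_mult_add)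

lemma Hb_herm: "hermitian_mat NN Hb"
proof -
  have "mat_adjoint Hb = Hb"
  proof (rule eq_matI)
    fix i j assume "i < dim_row Hb" "j < dim_col Hb"
    then have i: "i < NN" and j: "j < NN" using Hb_carrier by auto
    have "mat_adjoint Hb $$ (i,j) = cnj (Hb $$ (j,i))" using i j Hb_carrier by simp
    also have "\<dots> = Hb $$ (i,j)"
      using herm_entry[OF Hs_herm cAB_bound[OF i] cAB_bound[OF j]] by (auto simp: Hb_entry i j)
    finally show "mat_adjoint Hb $$ (i,j) = Hb $$ (i,j)" .
  qed (use Hb_carrier in auto)
  then show ?thesis using Hb_carrier by (simp add: hermitian_mat_def)
qed

end


context qsim2 begin

definition zA :: "nat \<Rightarrow> complex" where "zA p = (if cA p < dA' then 1 else -1)"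
definition zB :: "nat \<Rightarrow> complex" where "zB p = (if cB p < dB' then 1 else -1)"
definition "ZAa = dmat wA (\<lambda>a. if a div dA' < dA' then 1 else -1)"
definition "ZBb = dmat wB (\<lambda>b. if b div dB' < dB' then 1 else -1)"

lemma kron_ZA1: "kron ZAa (1\<^sub>m wB) = dmat NN zA"
  unfolding ZAa_def one_dmat kron_dmat[OF pos(5)] by (rule arg_cong[where f="dmat NN"]) (auto simp: zA_def cA_def)

lemma kron_1ZB: "kron (1\<^sub>m wA) ZBb = dmat NN zB"
  unfolding ZBb_def one_dmat kron_dmat[OF pos(5)] by (rule arg_cong[where f="dmat NN"]) (auto simp: zB_def cB_def)

lemma kron_ZAZB: "kron ZAa ZBb = dmat NN (\<lambda>p. zA p * zB p)"
  unfolding ZAa_def ZBb_def kron_dmat[OF pos(5)] by (rule arg_cong[where f="dmat NN"]) (auto simp: zA_def zB_def cA_def cB_def)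

lemma kron_11: "kron (1\<^sub>m wA) (1\<^sub>m wB) = 1\<^sub>m NN"
  by (rule kron_one[OF pos(5)])

lemma sq_zA: "zA p * zA p = 1" by (simp add: zA_def)
lemma sq_zB: "zB p * zB p = 1" by (simp add: zB_def)

definition Emb :: "complex mat" where "Emb = mat NN dd (\<lambda>(p,q). if cX p = 0 \<and> cY p = 0 \<and> cA p < dA' \<and> cB p < dB' \<and> q = cA p * dB' + cB p then 1 else 0)"
definition ee :: "nat \<Rightarrow> nat" where "ee q = idx (q div dB') 0 (q mod dB') 0"

lemma Emb_carrier: "Emb \<in> carrier_mat NN dd" by (simp add: Emb_def)

lemma ee_props: assumes q: "q < dd"
  shows "ee q < NN" "cA (ee q) = q div dB'" "cX (ee q) = 0" "cB (ee q) = q mod dB'" "cY (ee q) = 0"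
proof -
  have d: "q div dB' < dA'" using q by (rule div_lt)
  have m: "q mod dB' < dB'" using pos by simp
  have m': "q mod dB' < dB" by (rule less_le_trans[OF m dB'(2)])
  show "ee q < NN" unfolding ee_def using d m' dA' pos by (intro idx_bound) auto
  show "cA (ee q) = q div dB'" "cX (ee q) = 0" "cB (ee q) = q mod dB'" "cY (ee q) = 0"
    unfolding ee_def using coord_idx[of 0 "q mod dB'" 0 "q div dB'"] m' pos by auto
qed

lemma Emb_index: assumes p: "p < NN" and q: "q < dd"
  shows "Emb $$ (p, q) = (if p = ee q then 1 else 0)"
proof -
  have "(cX p = 0 \<and> cY p = 0 \<and> cA p < dA' \<and> cB p < dB' \<and> q = cA p * dB' + cB p) \<longleftrightarrow> p = ee q"
  proof
    assume h: "cX p = 0 \<and> cY p = 0 \<and> cA p < dA' \<and> cB p < dB' \<and> q = cA p * dB' + cB p"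
    then have "q div dB' = cA p" "q mod dB' = cB p" by auto
    then show "p = ee q" unfolding ee_def using h coord_recon[of p] by simp
  next
    assume h: "p = ee q"
    have "q div dB' < dA'" using q by (rule div_lt)
    moreover have "q = q div dB' * dB' + q mod dB'" by simp
    ultimately show "cX p = 0 \<and> cY p = 0 \<and> cA p < dA' \<and> cB p < dB' \<and> q = cA p * dB' + cB p"
      unfolding h using ee_props[OF q] pos by simp
  qed
  then show ?thesis using p q by (simp add: Emb_def)
qed

lemma mult_Emb_index: assumes M: "M \<in> carrier_mat NN NN" and p: "p < NN" and q: "q < dd"
  shows "(M * Emb) $$ (p, q) = M $$ (p, ee q)"
proof -
  have "(M * Emb) $$ (p, q) = (\<Sum>l<NN. M $$ (p, l) * Emb $$ (l, q))"
    by (rule mult_index_sum[OF M Emb_carrier p q])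
  also have "\<dots> = (\<Sum>l<NN. if l = ee q then M $$ (p, ee q) else 0)"
    by (intro sum.cong refl) (use q in \<open>auto simp: Emb_index\<close>)
  finally show ?thesis using ee_props(1)[OF q] by simp
qed

definition cond :: "nat \<Rightarrow> bool" where
  "cond p \<longleftrightarrow> cX p = 0 \<and> cY p = 0 \<and> cA p < dA' \<and> cB p < dB'"

lemma cond_bound: "cond p \<Longrightarrow> cA p * dB' + cB p < dd"
  unfolding cond_def using lt_mult_add by auto

lemma Emb_mult_index: assumes M: "M \<in> carrier_mat dd dd" and p: "p < NN" and q: "q < dd"
  shows "(Emb * M) $$ (p, q) = (if cond p then M $$ (cA p * dB' + cB p, q) else 0)"
proof -
  have "(Emb * M) $$ (p, q) = (\<Sum>l<dd. Emb $$ (p, l) * M $$ (l, q))"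
    by (rule mult_index_sum[OF Emb_carrier M p q])
  also have "\<dots> = (\<Sum>l<dd. if cond p \<and> l = cA p * dB' + cB p then M $$ (cA p * dB' + cB p, q) else 0)"
    by (intro sum.cong refl) (use p in \<open>auto simp: Emb_def cond_def\<close>)
  also have "\<dots> = (if cond p then M $$ (cA p * dB' + cB p, q) else 0)"
    using cond_bound by (cases "cond p") auto
  finally show ?thesis .
qed

definition "Acoef = (- \<i> * complex_of_real (1/4)) \<cdot>\<^sub>m Hb"
definition "AE = (- \<i> * complex_of_real 1) \<cdot>\<^sub>m Hp"
definition "Z1 = dmat NN (\<lambda>_. 1)"
definition "Z2 = dmat NN zA"
definition "Z3 = dmat NN zB"
definition "Z4 = dmat NN (\<lambda>p. zA p * zB p)"
definition "AT = Z4 * Acoef * Z4 + Z3 * Acoef * Z3 + Z2 * Acoef * Z2 + Z1 * Acoef * Z1"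

lemma Acoef_carrier: "Acoef \<in> carrier_mat NN NN" using Hb_carrier by (simp add: Acoef_def)

lemma AT_carrier: "AT \<in> carrier_mat NN NN"
  unfolding AT_def Z1_def Z2_def Z3_def Z4_def using Acoef_carrier
  by (intro add_carrier_mat mult_carrier_mat dmat_carrier) auto

lemma AT_index: assumes p: "p < NN" and q: "q < NN"
  shows "AT $$ (p, q) = Acoef $$ (p, q) * (zA p * zB p * (zA q * zB q) + zB p * zB q + zA p * zA q + 1)"
proof -
  have e: "\<And>f. (dmat NN f * Acoef * dmat NN f) $$ (p,q) = f p * Acoef $$ (p,q) * f q"
    by (rule dmat_conj_index[OF Acoef_carrier p q])
  have d: "\<And>f. dim_row (dmat NN f * Acoef * dmat NN f) = NN" "\<And>f. dim_col (dmat NN f * Acoef * dmat NN f) = NN"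
    by simp_all
  show ?thesis unfolding AT_def Z1_def Z2_def Z3_def Z4_def
    by (simp only: index_add_mat d e p q) (simp add: algebra_simps)
qed

lemma zsum: "zA p * zB p * (zA q * zB q) + zB p * zB q + zA p * zA q + 1 =
   (1 + zA p * zA q) * (1 + zB p * zB q)" by (simp add: algebra_simps)

lemma key: "AT * Emb = Emb * AE"
proof (rule eq_matI)
  fix p q assume "p < dim_row (Emb * AE)" "q < dim_col (Emb * AE)"
  then have p: "p < NN" and q: "q < dd" using Emb_carrier Hp_carrier by (auto simp: AE_def)
  have AEc: "AE \<in> carrier_mat dd dd" using Hp_carrier by (simp add: AE_def)
  note ep = ee_props[OF q]
  have l: "(AT * Emb) $$ (p, q) = AT $$ (p, ee q)" by (rule mult_Emb_index[OF AT_carrier p q])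
  also have "\<dots> = Acoef $$ (p, ee q) * ((1 + zA p) * (1 + zB p))"
  proof -
    have qd: "q div dB' < dA'" by (rule div_lt[OF q])
    have qm: "q mod dB' < dB'" using pos by simp
    show ?thesis using ep qd qm unfolding AT_index[OF p ep(1)] zsum by (simp add: zA_def zB_def)
  qed
  also have "\<dots> = (if cond p then - \<i> * Hp $$ (cA p * dB' + cB p, q) else 0)"
  proof (cases "cond p")
    case True
    have r: "rr (cA p * dB' + cB p) = cA p * dB + cB p" using True by (simp add: rr_def cond_def)
    have r2: "rr q = q div dB' * dB + q mod dB'" by (simp add: rr_def)
    have "Hp $$ (cA p * dB' + cB p, q) = Hs $$ (cA p * dB + cB p, q div dB' * dB + q mod dB')"
      using Hp_entry[OF cond_bound[OF True] q] r r2 by simp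
    moreover have "Acoef $$ (p, ee q) = (- \<i> / 4) * Hs $$ (cA p * dB + cB p, q div dB' * dB + q mod dB')"
      using True ep p Hb_carrier by (simp add: Acoef_def Hb_entry cond_def)
    moreover have "(1 + zA p) * (1 + zB p) = 4" using True by (simp add: zA_def zB_def cond_def)
    ultimately show ?thesis using True by simp
  next
    case False
    then have "\<not> (cX p = 0 \<and> cY p = 0) \<or> \<not> (cA p < dA' \<and> cB p < dB')" by (auto simp: cond_def)
    then show ?thesis
    proof
      assume "\<not> (cX p = 0 \<and> cY p = 0)"
      then have "Hb $$ (p, ee q) = 0" using ep p by (auto simp: Hb_entry)
      then show ?thesis using False p ep Hb_carrier by (simp add: Acoef_def)
    next
      assume "\<not> (cA p < dA' \<and> cB p < dB')"
      then have "(1 + zA p) * (1 + zB p) = 0" by (auto simp: zA_def zB_def)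
      then show ?thesis using False by simp
    qed
  qed
  also have "\<dots> = (Emb * AE) $$ (p, q)"
    unfolding Emb_mult_index[OF AEc p q] using p q cond_bound Hp_carrier by (auto simp: AE_def)
  finally show "(AT * Emb) $$ (p, q) = (Emb * AE) $$ (p, q)" .
qed (use Emb_carrier AT_carrier Hp_carrier in \<open>auto simp: AE_def\<close>)

end


lemma adj_mult: fixes A :: "complex mat" assumes A: "A \<in> carrier_mat n m" and B: "B \<in> carrier_mat m k"
  shows "mat_adjoint (A * B) = mat_adjoint B * mat_adjoint A"
proof (rule eq_matI)
  fix i j assume "i < dim_row (mat_adjoint B * mat_adjoint A)" "j < dim_col (mat_adjoint B * mat_adjoint A)"
  then have i: "i < k" and j: "j < n" using A B by auto
  have "mat_adjoint (A * B) $$ (i,j) = cnj ((A * B) $$ (j,i))" using A B i j by simp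
  also have "\<dots> = cnj (\<Sum>l<m. A $$ (j,l) * B $$ (l,i))" by (simp only: mult_index_sum[OF A B j i])
  also have "\<dots> = (\<Sum>l<m. mat_adjoint B $$ (i,l) * mat_adjoint A $$ (l,j))"
    by (simp only: cnj_sum complex_cnj_mult, intro sum.cong refl) (use A B i j in \<open>auto simp: mult.commute\<close>)
  also have "\<dots> = (mat_adjoint B * mat_adjoint A) $$ (i,j)"
    by (rule mult_index_sum[symmetric]) (use A B i j in auto)
  finally show "mat_adjoint (A * B) $$ (i,j) = (mat_adjoint B * mat_adjoint A) $$ (i,j)" .
qed (use A B in auto)

lemma unitary_mult: fixes A :: "complex mat" assumes A: "unitary_mat n A" and B: "unitary_mat n B"
  shows "unitary_mat n (A * B)"
proof -
  have Ac: "A \<in> carrier_mat n n" and Bc: "B \<in> carrier_mat n n" using A B by (auto simp: unitary_mat_def)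
  have AA: "mat_adjoint A * A = 1\<^sub>m n" and BB: "mat_adjoint B * B = 1\<^sub>m n" using A B by (auto simp: unitary_mat_def)
  have aA: "mat_adjoint A \<in> carrier_mat n n" "mat_adjoint B \<in> carrier_mat n n" using Ac Bc by auto
  have "mat_adjoint (A * B) * (A * B) = (mat_adjoint B * mat_adjoint A) * (A * B)" by (simp only: adj_mult[OF Ac Bc])
  also have "\<dots> = mat_adjoint B * (mat_adjoint A * (A * B))" by (rule assoc_mult_mat[OF aA(2) aA(1)]) (use Ac Bc in auto)
  also have "mat_adjoint A * (A * B) = (mat_adjoint A * A) * B" by (rule assoc_mult_mat[symmetric, OF aA(1) Ac Bc])
  also have "\<dots> = B" using AA Bc by simp
  finally show ?thesis using BB Ac Bc by (simp add: unitary_mat_def)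
qed

context qsim2 begin

definition piA :: "nat \<Rightarrow> nat" where "piA a = (if a div dA' < dA' then (a mod dA') * dA' + a div dA' else a)"
definition piB :: "nat \<Rightarrow> nat" where "piB b = (if b div dB' < dB' then (b mod dB') * dB' + b div dB' else b)"
definition "SA = pmat wA piA"
definition "SB = pmat wB piB"
definition pi :: "nat \<Rightarrow> nat" where "pi p = piA (p div wB) * wB + piB (p mod wB)"

lemma piA_bound: "a < wA \<Longrightarrow> piA a < wA"
proof -
  assume a: "a < wA"
  show ?thesis
  proof (cases "a div dA' < dA'")
    case True
    have "a mod dA' < dA" using pos dA' by (meson less_le_trans mod_less_divisor)
    then show ?thesis using True unfolding piA_def by (simp add: lt_mult_add)
  qed (use a in \<open>simp add: piA_def\<close>)
qed

lemma piB_bound: "b < wB \<Longrightarrow> piB b < wB"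
proof -
  assume a: "b < wB"
  show ?thesis
  proof (cases "b div dB' < dB'")
    case True
    have "b mod dB' < dB" using pos dB' by (meson less_le_trans mod_less_divisor)
    then show ?thesis using True unfolding piB_def by (simp add: lt_mult_add)
  qed (use a in \<open>simp add: piB_def\<close>)
qed

lemma piA_inv: "piA (piA a) = a"
proof (cases "a div dA' < dA'")
  case True
  have m: "a mod dA' < dA'" using pos by simp
  have "piA a = (a mod dA') * dA' + a div dA'" using True by (simp add: piA_def)
  moreover have "((a mod dA') * dA' + a div dA') div dA' = a mod dA'" using True by simp
  moreover have "((a mod dA') * dA' + a div dA') mod dA' = a div dA'" using True by simp
  ultimately show ?thesis using m by (simp add: piA_def)
qed (simp add: piA_def)

lemma piB_inv: "piB (piB a) = a"
proof (cases "a div dB' < dB'")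
  case True
  have m: "a mod dB' < dB'" using pos by simp
  have "piB a = (a mod dB') * dB' + a div dB'" using True by (simp add: piB_def)
  moreover have "((a mod dB') * dB' + a div dB') div dB' = a mod dB'" using True by simp
  moreover have "((a mod dB') * dB' + a div dB') mod dB' = a div dB'" using True by simp
  ultimately show ?thesis using m by (simp add: piB_def)
qed (simp add: piB_def)

lemma pi_bound: "p < NN \<Longrightarrow> pi p < NN"
  unfolding pi_def using piA_bound piB_bound pos by (auto intro!: lt_mult_add div_lt)

lemma pi_inv: "pi (pi p) = p"
proof -
  have b: "piB (p mod wB) < wB" using piB_bound pos by simp
  have "pi p div wB = piA (p div wB)" "pi p mod wB = piB (p mod wB)"
    unfolding pi_def by (rule dm_div[OF b], rule dm_mod[OF b])
  then show ?thesis unfolding pi_def by (simp add: piA_inv piB_inv) (metis div_mult_mod_eq)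
qed

lemma S_pmat: "kron SA SB = pmat NN pi"
  unfolding SA_def SB_def pi_def by (rule kron_pmat[OF pos(5) piA_bound piB_bound])

lemma S_unitary: "unitary_mat NN (kron SA SB)"
  unfolding S_pmat by (rule pmat_unitary[OF pi_bound pi_inv])

lemma SA_unitary: "unitary_mat wA SA" unfolding SA_def
  by (rule pmat_unitary) (auto intro: piA_bound piA_inv)
lemma SB_unitary: "unitary_mat wB SB" unfolding SB_def
  by (rule pmat_unitary) (auto intro: piB_bound piB_inv)

lemma S_sq: "kron SA SB * kron SA SB = 1\<^sub>m NN"
  unfolding S_pmat by (rule pmat_sq[OF pi_bound pi_inv])

lemma pi_coords: assumes p: "p < NN"
  shows "cA (pi p) = (if cA p < dA' then cX p else cA p)"
    "cX (pi p) = (if cA p < dA' then cA p else cX p)"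
    "cB (pi p) = (if cB p < dB' then cY p else cB p)"
    "cY (pi p) = (if cB p < dB' then cB p else cY p)"
proof -
  note cb = coord_bounds[OF p]
  have a: "p div wB = cA p * dA' + cX p" by (simp add: cA_def cX_def)
  have b: "p mod wB = cB p * dB' + cY p" by (simp add: cB_def cY_def)
  have pa: "piA (p div wB) = (if cA p < dA' then cX p * dA' + cA p else cA p * dA' + cX p)"
    unfolding a piA_def using cb by simp
  have pb: "piB (p mod wB) = (if cB p < dB' then cY p * dB' + cB p else cB p * dB' + cY p)"
    unfolding b piB_def using cb by simp
  have e: "pi p = idx (if cA p < dA' then cX p else cA p) (if cA p < dA' then cA p else cX p)
                    (if cB p < dB' then cY p else cB p) (if cB p < dB' then cB p else cY p)"
    unfolding pi_def idx_def pa pb by simp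
  have x: "(if cA p < dA' then cA p else cX p) < dA'" using cb by simp
  have bb: "(if cB p < dB' then cY p else cB p) < dB" using cb dB' by auto
  have y: "(if cB p < dB' then cB p else cY p) < dB'" using cb by simp
  show "cA (pi p) = (if cA p < dA' then cX p else cA p)"
    "cX (pi p) = (if cA p < dA' then cA p else cX p)"
    "cB (pi p) = (if cB p < dB' then cY p else cB p)"
    "cY (pi p) = (if cB p < dB' then cB p else cY p)"
    unfolding e using coord_idx[OF x bb y] by simp_all
qed

abbreviation "plc v \<equiv> place dA dA' 1 dB dB' 1 v (ket0 (dA * 1 * dB * 1))"

lemma plc_carrier: "plc v \<in> carrier_vec NN"
  by (simp add: place_def Let_def wsA_def)

lemma plc_index: assumes i: "i < NN"
  shows "plc v $ i = v $ (cX i * dB' + cY i) * (if cA i = 0 \<and> cB i = 0 then 1 else 0)"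
proof -
  have k: "cA i * dB + cB i < dA * dB" by (rule cAB_bound[OF i])
  have z: "(cA i * dB + cB i = 0) \<longleftrightarrow> (cA i = 0 \<and> cB i = 0)" using pos by simp
  have "plc v $ i = v $ (cX i * dB' + cY i) * ket0 (dA * 1 * dB * 1) $ (cA i * dB + cB i)"
    using i by (simp add: place_def Let_def wsA_def ws_dec_def cA_def cX_def cB_def cY_def)
  also have "\<dots> = v $ (cX i * dB' + cY i) * (if cA i = 0 \<and> cB i = 0 then 1 else 0)"
    using k z by (simp add: ket0_def)
  finally show ?thesis .
qed

lemma Emb_vec_index: assumes v: "v \<in> carrier_vec dd" and p: "p < NN"
  shows "(Emb *\<^sub>v v) $ p = (if cond p then v $ (cA p * dB' + cB p) else 0)"
proof -
  have "(Emb *\<^sub>v v) $ p = (\<Sum>l<dd. Emb $$ (p, l) * v $ l)"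
    by (rule mult_vec_index_sum[OF Emb_carrier v p])
  also have "\<dots> = (\<Sum>l<dd. if cond p \<and> l = cA p * dB' + cB p then v $ (cA p * dB' + cB p) else 0)"
    by (intro sum.cong refl) (use p in \<open>auto simp: Emb_def cond_def\<close>)
  also have "\<dots> = (if cond p then v $ (cA p * dB' + cB p) else 0)"
    using cond_bound by (cases "cond p") auto
  finally show ?thesis .
qed

lemma S_plc: assumes v: "v \<in> carrier_vec dd"
  shows "kron SA SB *\<^sub>v plc v = Emb *\<^sub>v v"
proof (rule eq_vecI)
  fix p assume "p < dim_vec (Emb *\<^sub>v v)"
  then have p: "p < NN" using Emb_carrier by simp
  note cb = coord_bounds[OF p]
  note pc = pi_coords[OF p]
  have "(kron SA SB *\<^sub>v plc v) $ p = plc v $ pi p"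
    unfolding S_pmat using pmat_mult_vec[OF plc_carrier pi_bound] p by simp
  also have "\<dots> = v $ (cX (pi p) * dB' + cY (pi p)) * (if cA (pi p) = 0 \<and> cB (pi p) = 0 then 1 else 0)"
    by (rule plc_index[OF pi_bound[OF p]])
  also have "\<dots> = (if cond p then v $ (cA p * dB' + cB p) else 0)"
    unfolding pc using cb dA' dB' by (auto simp: cond_def)
  also have "\<dots> = (Emb *\<^sub>v v) $ p" by (rule Emb_vec_index[OF v p, symmetric])
  finally show "(kron SA SB *\<^sub>v plc v) $ p = (Emb *\<^sub>v v) $ p" .
qed (use Emb_carrier in \<open>simp add: SA_def SB_def\<close>)

lemma plc_S: assumes v: "v \<in> carrier_vec dd"
  shows "plc v = kron SA SB *\<^sub>v (Emb *\<^sub>v v)"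
proof -
  have Sc: "kron SA SB \<in> carrier_mat NN NN" using S_unitary by (simp add: unitary_mat_def)
  have "kron SA SB *\<^sub>v (Emb *\<^sub>v v) = kron SA SB *\<^sub>v (kron SA SB *\<^sub>v plc v)" by (simp only: S_plc[OF v])
  also have "\<dots> = (kron SA SB * kron SA SB) *\<^sub>v plc v" by (rule assoc_mult_mat_vec[symmetric, OF Sc Sc plc_carrier])
  also have "\<dots> = plc v" unfolding S_sq by (rule one_mult_mat_vec[OF plc_carrier])
  finally show ?thesis by simp
qed

end


lemma one_unitary: "unitary_mat n (1\<^sub>m n)"
  unfolding one_dmat by (rule dmat_unitary) simp

context qsim2 begin

definition "Eq t = evol Hb (1/4 * t)"
definition "P1 t = Z1 * Eq t * Z1"
definition "P2 t = Z2 * Eq t * Z2"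
definition "P3 t = Z3 * Eq t * Z3"
definition "P4 t = Z4 * Eq t * Z4"
definition "Tm t = P4 t * P3 t * P2 t * P1 t"

lemma Z_facts: "Z1 \<in> carrier_mat NN NN" "Z2 \<in> carrier_mat NN NN" "Z3 \<in> carrier_mat NN NN" "Z4 \<in> carrier_mat NN NN"
  "Z1 * Z1 = 1\<^sub>m NN" "Z2 * Z2 = 1\<^sub>m NN" "Z3 * Z3 = 1\<^sub>m NN" "Z4 * Z4 = 1\<^sub>m NN"
  unfolding Z1_def Z2_def Z3_def Z4_def
  by (auto intro!: dmat_sq simp: zA_def zB_def)

lemma Z_unitary: "unitary_mat NN Z1" "unitary_mat NN Z2" "unitary_mat NN Z3" "unitary_mat NN Z4"
  unfolding Z1_def Z2_def Z3_def Z4_def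
  by (auto intro!: dmat_unitary simp: zA_def zB_def)

lemma qa_Eq: "qa NN Eq Acoef"
proof -
  have "qa NN (\<lambda>t. evol Hb (1/4 * t)) ((- \<i> * complex_of_real (1/4)) \<cdot>\<^sub>m Hb)"
    by (rule qa_evol_gen[OF Hb_herm]) auto
  moreover have "(\<lambda>t. evol Hb (1/4 * t)) = Eq" by (rule ext) (simp add: Eq_def)
  ultimately show ?thesis by (simp add: Acoef_def)
qed

lemma qa_T: "qa NN Tm AT"
proof -
  have q4: "qa NN P4 (Z4 * Acoef * Z4)"
    using qa_conj[OF qa_Eq Z_facts(4) Z_facts(8)] by (simp add: P4_def[abs_def])
  have q3: "qa NN P3 (Z3 * Acoef * Z3)"
    using qa_conj[OF qa_Eq Z_facts(3) Z_facts(7)] by (simp add: P3_def[abs_def])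
  have q2: "qa NN P2 (Z2 * Acoef * Z2)"
    using qa_conj[OF qa_Eq Z_facts(2) Z_facts(6)] by (simp add: P2_def[abs_def])
  have q1: "qa NN P1 (Z1 * Acoef * Z1)"
    using qa_conj[OF qa_Eq Z_facts(1) Z_facts(5)] by (simp add: P1_def[abs_def])
  have "qa NN (\<lambda>t. P4 t * P3 t * P2 t * P1 t) AT"
    unfolding AT_def using qa_mult[OF qa_mult[OF qa_mult[OF q4 q3] q2] q1] by simp
  then show ?thesis by (simp add: Tm_def[abs_def])
qed

lemma qa_E: "qa dd (\<lambda>t. evol Hp t) AE"
proof -
  have "qa dd (\<lambda>t. evol Hp (1 * t)) ((- \<i> * complex_of_real 1) \<cdot>\<^sub>m Hp)"
    by (rule qa_evol_gen[OF Hp_herm]) auto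
  then show ?thesis by (simp add: AE_def)
qed

lemma err: "\<exists>C. \<forall>t. 0 < t \<and> t \<le> 1 \<longrightarrow> (\<forall>\<phi>\<in>carrier_vec dd.
           vnorm (Tm t *\<^sub>v (Emb *\<^sub>v \<phi>) - Emb *\<^sub>v (evol Hp t *\<^sub>v \<phi>)) \<le> C * t\<^sup>2 * vnorm \<phi>)"
  by (rule step_err[OF qa_T qa_E Emb_carrier key])

lemma Eq_unitary: "unitary_mat NN (Eq t)"
  unfolding Eq_def by (rule evol_unitary[OF Hb_herm])

lemma Tm_unitary: "unitary_mat NN (Tm t)"
  unfolding Tm_def P1_def P2_def P3_def P4_def
  by (intro unitary_mult Z_unitary Eq_unitary)

lemma Tm_carrier: "Tm t \<in> carrier_mat NN NN"
  using Tm_unitary by (simp add: unitary_mat_def)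

definition Lsteps :: "real \<Rightarrow> (complex mat \<times> complex mat \<times> real) list" where
  "Lsteps t = [(1\<^sub>m wA, 1\<^sub>m wB, t / 4), (1\<^sub>m wA, 1\<^sub>m wB, 0), (ZAa, 1\<^sub>m wB, t / 4), (ZAa, 1\<^sub>m wB, 0),
               (1\<^sub>m wA, ZBb, t / 4), (1\<^sub>m wA, ZBb, 0), (ZAa, ZBb, t / 4), (ZAa, ZBb, 0)]"

lemma P_apply: assumes v: "v \<in> carrier_vec NN" and Z: "Z \<in> carrier_mat NN NN"
  shows "(Z * Eq t * Z) *\<^sub>v v = Z *\<^sub>v (Eq t *\<^sub>v (Z *\<^sub>v v))"
proof -
  have E: "Eq t \<in> carrier_mat NN NN" using Eq_unitary by (simp add: unitary_mat_def)
  have "(Z * Eq t * Z) *\<^sub>v v = (Z * Eq t) *\<^sub>v (Z *\<^sub>v v)"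
    by (rule assoc_mult_mat_vec[OF mult_carrier_mat[OF Z E] Z v])
  also have "\<dots> = Z *\<^sub>v (Eq t *\<^sub>v (Z *\<^sub>v v))"
    by (rule assoc_mult_mat_vec[OF Z E]) (use Z v in auto)
  finally show ?thesis .
qed

lemma Tm_apply: assumes v: "v \<in> carrier_vec NN"
  shows "Tm t *\<^sub>v v = P4 t *\<^sub>v (P3 t *\<^sub>v (P2 t *\<^sub>v (P1 t *\<^sub>v v)))"
proof -
  have c: "P1 t \<in> carrier_mat NN NN" "P2 t \<in> carrier_mat NN NN" "P3 t \<in> carrier_mat NN NN" "P4 t \<in> carrier_mat NN NN"
    unfolding P1_def P2_def P3_def P4_def using Z_unitary Eq_unitary
    by (auto intro!: mult_carrier_mat simp: unitary_mat_def)
  have c2: "P4 t * P3 t \<in> carrier_mat NN NN" using c by auto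
  have c3: "P4 t * P3 t * P2 t \<in> carrier_mat NN NN" using c by auto
  have v1: "P1 t *\<^sub>v v \<in> carrier_vec NN" using c v by auto
  have v2: "P2 t *\<^sub>v (P1 t *\<^sub>v v) \<in> carrier_vec NN" using c v1 by auto
  have "Tm t *\<^sub>v v = (P4 t * P3 t * P2 t) *\<^sub>v (P1 t *\<^sub>v v)"
    unfolding Tm_def by (rule assoc_mult_mat_vec[OF c3 c(1) v])
  also have "\<dots> = (P4 t * P3 t) *\<^sub>v (P2 t *\<^sub>v (P1 t *\<^sub>v v))"
    by (rule assoc_mult_mat_vec[OF c2 c(2) v1])
  also have "\<dots> = P4 t *\<^sub>v (P3 t *\<^sub>v (P2 t *\<^sub>v (P1 t *\<^sub>v v)))"
    by (rule assoc_mult_mat_vec[OF c(4) c(3) v2])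
  finally show ?thesis .
qed

lemma run_L: assumes v: "v \<in> carrier_vec NN"
  shows "run_steps Hb (Lsteps t) v = Tm t *\<^sub>v v"
proof -
  have E0: "evol Hb 0 = 1\<^sub>m NN" by (rule evol_zero[OF Hb_carrier])
  have Z1: "Z1 = 1\<^sub>m NN" by (simp add: Z1_def one_dmat)
  have k: "kron (1\<^sub>m wA) (1\<^sub>m wB) = Z1" "kron ZAa (1\<^sub>m wB) = Z2" "kron (1\<^sub>m wA) ZBb = Z3" "kron ZAa ZBb = Z4"
    using kron_11 kron_ZA1 kron_1ZB kron_ZAZB Z1 by (simp_all add: Z2_def Z3_def Z4_def)
  have Ee: "evol Hb (t / 4) = Eq t" by (simp add: Eq_def)
  have Ec: "Eq t \<in> carrier_mat NN NN" using Eq_unitary by (simp add: unitary_mat_def)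
  note Zc = Z_facts(1-4)
  have "run_steps Hb (Lsteps t) v =
     1\<^sub>m NN *\<^sub>v (Z4 *\<^sub>v (Eq t *\<^sub>v (Z4 *\<^sub>v (1\<^sub>m NN *\<^sub>v (Z3 *\<^sub>v (Eq t *\<^sub>v (Z3 *\<^sub>v
     (1\<^sub>m NN *\<^sub>v (Z2 *\<^sub>v (Eq t *\<^sub>v (Z2 *\<^sub>v (1\<^sub>m NN *\<^sub>v (Z1 *\<^sub>v (Eq t *\<^sub>v (Z1 *\<^sub>v v)))))))))))))))"
    unfolding run_steps_def Lsteps_def by (simp only: foldl_Cons foldl_Nil prod.case k E0 Ee)
  also have "\<dots> = P4 t *\<^sub>v (P3 t *\<^sub>v (P2 t *\<^sub>v (P1 t *\<^sub>v v)))"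
  proof -
    have c: "P1 t \<in> carrier_mat NN NN" "P2 t \<in> carrier_mat NN NN" "P3 t \<in> carrier_mat NN NN" "P4 t \<in> carrier_mat NN NN"
      unfolding P1_def P2_def P3_def P4_def using Z_unitary Eq_unitary
      by (auto intro!: mult_carrier_mat simp: unitary_mat_def)
    define w1 where "w1 = P1 t *\<^sub>v v"
    define w2 where "w2 = P2 t *\<^sub>v w1"
    define w3 where "w3 = P3 t *\<^sub>v w2"
    define w4 where "w4 = P4 t *\<^sub>v w3"
    have w: "w1 \<in> carrier_vec NN" "w2 \<in> carrier_vec NN" "w3 \<in> carrier_vec NN" "w4 \<in> carrier_vec NN"
      unfolding w1_def w2_def w3_def w4_def using c v by auto
    have a1: "Z1 *\<^sub>v (Eq t *\<^sub>v (Z1 *\<^sub>v v)) = w1" unfolding w1_def P1_def by (rule P_apply[OF v Zc(1), symmetric])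
    have a2: "Z2 *\<^sub>v (Eq t *\<^sub>v (Z2 *\<^sub>v w1)) = w2" unfolding w2_def P2_def by (rule P_apply[OF w(1) Zc(2), symmetric])
    have a3: "Z3 *\<^sub>v (Eq t *\<^sub>v (Z3 *\<^sub>v w2)) = w3" unfolding w3_def P3_def by (rule P_apply[OF w(2) Zc(3), symmetric])
    have a4: "Z4 *\<^sub>v (Eq t *\<^sub>v (Z4 *\<^sub>v w3)) = w4" unfolding w4_def P4_def by (rule P_apply[OF w(3) Zc(4), symmetric])
    show ?thesis
      by (simp only: a1 one_mult_mat_vec[OF w(1)] a2 one_mult_mat_vec[OF w(2)] a3 one_mult_mat_vec[OF w(3)] a4
           one_mult_mat_vec[OF w(4)]) (simp add: w1_def w2_def w3_def w4_def)
  qed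
  also have "\<dots> = Tm t *\<^sub>v v" by (rule Tm_apply[OF v, symmetric])
  finally show ?thesis .
qed

lemma run_rep: assumes v: "v \<in> carrier_vec NN"
  shows "run_steps Hb (concat (replicate k (Lsteps t))) v = ((\<lambda>v. Tm t *\<^sub>v v) ^^ k) v"
  using v
proof (induction k arbitrary: v)
  case 0 then show ?case by (simp add: run_steps_def)
next
  case (Suc k)
  have "run_steps Hb (concat (replicate (Suc k) (Lsteps t))) v
      = run_steps Hb (concat (replicate k (Lsteps t))) (run_steps Hb (Lsteps t) v)"
    by (simp add: run_steps_def)
  also have "\<dots> = ((\<lambda>v. Tm t *\<^sub>v v) ^^ k) (Tm t *\<^sub>v v)"
  proof -
    have c: "Tm t *\<^sub>v v \<in> carrier_vec NN" using mult_mat_vec_carrier[OF Tm_carrier Suc.prems] .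
    show ?thesis using Suc.IH[OF c] run_L[OF Suc.prems] by simp
  qed
  also have "\<dots> = ((\<lambda>v. Tm t *\<^sub>v v) ^^ Suc k) v" by (simp add: funpow_Suc_right del: funpow.simps)
  finally show ?case .
qed

lemma evol_pow: assumes v: "v \<in> carrier_vec dd"
  shows "((\<lambda>v. evol Hp t *\<^sub>v v) ^^ k) v = evol Hp (real k * t) *\<^sub>v v"
proof (induction k)
  case 0 then show ?case using v by (simp add: evol_zero[OF Hp_carrier])
next
  case (Suc k)
  have c: "evol Hp t \<in> carrier_mat dd dd" "evol Hp (real k * t) \<in> carrier_mat dd dd"
    by (rule evol_carrier[OF Hp_carrier])+
  have "((\<lambda>v. evol Hp t *\<^sub>v v) ^^ Suc k) v = evol Hp t *\<^sub>v (evol Hp (real k * t) *\<^sub>v v)" using Suc by simp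
  also have "\<dots> = (evol Hp t * evol Hp (real k * t)) *\<^sub>v v" by (rule assoc_mult_mat_vec[symmetric, OF c v])
  also have "\<dots> = evol Hp (real (Suc k) * t) *\<^sub>v v" by (simp add: evol_add[OF Hp_carrier] algebra_simps)
  finally show ?case .
qed

end


context qsim2 begin

lemma achieves_1: "achieves dA dB Hs dA' dB' Hp 1"
proof -
  obtain C where C: "\<And>t. 0 < t \<Longrightarrow> t \<le> 1 \<Longrightarrow> (\<forall>\<phi>\<in>carrier_vec dd.
           vnorm (Tm t *\<^sub>v (Emb *\<^sub>v \<phi>) - Emb *\<^sub>v (evol Hp t *\<^sub>v \<phi>)) \<le> C * t\<^sup>2 * vnorm \<phi>)"
    using err by blast
  define C' where "C' = max C 0"
  have C'0: "C' \<ge> 0" by (simp add: C'_def)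
  show ?thesis unfolding achieves_def
  proof (intro conjI allI impI)
    show "(0::real) < 1" by simp
    fix t \<epsilon> \<delta> :: real assume t: "t > 0" and eps: "\<epsilon> > 0" and del: "\<delta> > 0"
    define n :: nat where "n = nat \<lceil>t / \<delta>\<rceil> + nat \<lceil>t\<rceil> + nat \<lceil>C' * t\<^sup>2 / \<epsilon>\<rceil> + 1"
    define \<tau> where "\<tau> = t / real n"
    have n1: "n \<ge> 1" by (simp add: n_def)
    have npos: "real n > 0" using n1 by simp
    have tau_pos: "\<tau> > 0" using t npos by (simp add: \<tau>_def)
    have nge: "t / \<delta> \<le> real n" "t \<le> real n" "C' * t\<^sup>2 / \<epsilon> \<le> real n"
    proof -
      have a: "x \<le> real (nat \<lceil>x\<rceil>)" for x :: real by linarith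
      have b: "real (nat \<lceil>t / \<delta>\<rceil>) + real (nat \<lceil>t\<rceil>) + real (nat \<lceil>C' * t\<^sup>2 / \<epsilon>\<rceil>) + 1 = real n"
        by (simp add: n_def)
      have c: "real (nat \<lceil>x\<rceil>) \<ge> 0" for x :: real by simp
      show "t / \<delta> \<le> real n" "t \<le> real n" "C' * t\<^sup>2 / \<epsilon> \<le> real n"
        using a[of "t / \<delta>"] a[of t] a[of "C' * t\<^sup>2 / \<epsilon>"] b c[of "t / \<delta>"] c[of t] c[of "C' * t\<^sup>2 / \<epsilon>"]
        by linarith+
    qed
    have tau_d: "\<tau> \<le> \<delta>"
    proof -
      have "t \<le> \<delta> * real n" using nge(1) del by (simp add: divide_le_eq mult.commute)
      then show ?thesis using npos by (simp add: \<tau>_def divide_le_eq mult.commute)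
    qed
    have tau1: "\<tau> \<le> 1" using nge(2) npos by (simp add: \<tau>_def divide_le_eq)
    have tn: "real n * \<tau> = t" using npos by (simp add: \<tau>_def)
    have errb: "real n * (C' * \<tau>\<^sup>2) \<le> \<epsilon>"
    proof -
      have "real n * (C' * \<tau>\<^sup>2) = C' * t\<^sup>2 / real n" using npos by (simp add: \<tau>_def power2_eq_square)
      also have "\<dots> \<le> \<epsilon>" using nge(3) eps npos by (simp add: divide_le_eq mult.commute)
      finally show ?thesis .
    qed
    define g where "g j = (if j = 0 then (SA, SB, 0) # Lsteps \<tau> else Lsteps \<tau>, (SA, SB), real (Suc j) * \<tau>)" for j
    define segs where "segs = map g [0..<n]"
    have len: "length segs = n" by (simp add: segs_def)
    have nth: "j < n \<Longrightarrow> segs ! j = g j" for j by (simp add: segs_def)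
    have uA: "unitary_mat wA (1\<^sub>m wA)" "unitary_mat wA ZAa" "unitary_mat wA SA"
      using one_unitary SA_unitary by (auto simp: ZAa_def intro!: dmat_unitary)
    have uB: "unitary_mat wB (1\<^sub>m wB)" "unitary_mat wB ZBb" "unitary_mat wB SB"
      using one_unitary SB_unitary by (auto simp: ZBb_def intro!: dmat_unitary)
    have f0: "segs \<noteq> []" using n1 by (simp add: segs_def)
    have f1: "\<forall>seg\<in>set segs. (\<forall>(UA, UB, tau)\<in>set (fst seg).
              unitary_mat (wsA dA dA' 1) UA \<and> unitary_mat (wsA dB dB' 1) UB \<and> tau \<ge> 0) \<and>
           unitary_mat (wsA dA dA' 1) (fst (fst (snd seg))) \<and>
           unitary_mat (wsA dB dB' 1) (snd (fst (snd seg)))"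
      unfolding segs_def g_def Lsteps_def wsA_def using uA uB tau_pos by auto
    have f2: "\<forall>j<length segs. 0 < snd (snd (segs ! j)) \<and>
            (j = 0 \<longrightarrow> snd (snd (segs ! j)) \<le> \<delta>) \<and>
            (j > 0 \<longrightarrow> snd (snd (segs ! (j - 1))) < snd (snd (segs ! j)) \<and>
                       snd (snd (segs ! j)) - snd (snd (segs ! (j - 1))) \<le> \<delta>)"
    proof (intro allI impI)
      fix j assume j: "j < length segs"
      then have jn: "j < n" by (simp add: len)
      show "0 < snd (snd (segs ! j)) \<and>
            (j = 0 \<longrightarrow> snd (snd (segs ! j)) \<le> \<delta>) \<and>
            (j > 0 \<longrightarrow> snd (snd (segs ! (j - 1))) < snd (snd (segs ! j)) \<and>
                       snd (snd (segs ! j)) - snd (snd (segs ! (j - 1))) \<le> \<delta>)"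
      proof (cases j)
        case 0 then show ?thesis using jn tau_pos tau_d by (simp add: nth g_def)
      next
        case (Suc i)
        have "segs ! (j - 1) = g i" using Suc jn by (simp add: nth)
        moreover have "segs ! j = g j" using jn by (simp add: nth)
        moreover have "0 < \<tau> * real i + \<tau> * 2"
          using tau_pos by (intro add_nonneg_pos) auto
        ultimately show ?thesis using Suc tau_pos tau_d by (simp add: g_def algebra_simps)
      qed
    qed
    have f3: "snd (snd (last segs)) = t"
    proof -
      have "last segs = g (n - 1)" using n1 by (simp add: segs_def last_map)
      then show ?thesis using n1 tn by (simp add: g_def of_nat_diff)
    qed
    have f4: "(\<Sum>seg\<leftarrow>segs. \<Sum>(UA, UB, tau)\<leftarrow>fst seg. tau) = t / 1"
    proof -
      have "map (\<lambda>seg. \<Sum>(UA, UB, tau)\<leftarrow>fst seg. tau) segs = map (\<lambda>_. \<tau>) [0..<n]"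
        unfolding segs_def by (simp add: g_def Lsteps_def)
      then have "(\<Sum>seg\<leftarrow>segs. \<Sum>(UA, UB, tau)\<leftarrow>fst seg. tau) = (\<Sum>_\<leftarrow>[0..<n]. \<tau>)" by simp
      also have "\<dots> = real n * \<tau>" by (simp add: sum_list_triv)
      finally have "(\<Sum>seg\<leftarrow>segs. \<Sum>(UA, UB, tau)\<leftarrow>fst seg. tau) = real n * \<tau>" .
      then show ?thesis using tn by (metis div_by_1)
    qed
    have f5: "\<forall>\<psi>. dim_vec \<psi> = dA' * dB' \<and> vnorm \<psi> = 1 \<longrightarrow>
          (\<forall>j<length segs.
             \<exists>\<phi>. dim_vec \<phi> = dA * 1 * dB * 1 \<and>
               vnorm (kron (fst (fst (snd (segs ! j)))) (snd (fst (snd (segs ! j))))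
                        *\<^sub>v run_steps (ext_ham dA dA' 1 dB dB' 1 Hs)
                               (concat (map fst (take (Suc j) segs)))
                               (place dA dA' 1 dB dB' 1 \<psi> (ket0 (dA * 1 * dB * 1)))
                      - place dA dA' 1 dB dB' 1 (evol Hp (snd (snd (segs ! j))) *\<^sub>v \<psi>) \<phi>)
               \<le> \<epsilon>)"
    proof (intro allI impI)
      fix \<psi> j assume psi: "dim_vec \<psi> = dA' * dB' \<and> vnorm \<psi> = 1" and j: "j < length segs"
      have pc: "\<psi> \<in> carrier_vec dd" using psi by (intro carrier_vecI) simp
      have jn: "j < n" using j len by simp
      have sj: "segs ! j = g j" by (rule nth[OF jn])
      have tk: "take (Suc j) segs = map g [0..<Suc j]" unfolding segs_def using jn by (simp add: take_map)
      have up: "[0..<Suc j] = 0 # [1..<Suc j]" by (simp add: upt_rec)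
      have mr: "map (fst \<circ> g) [1..<Suc j] = replicate j (Lsteps \<tau>)"
      proof -
        have "map (fst \<circ> g) [1..<Suc j] = map (\<lambda>_. Lsteps \<tau>) [1..<Suc j]"
          by (rule map_cong[OF refl]) (auto simp: g_def)
        then show ?thesis by (simp add: map_replicate_const)
      qed
      have cc: "concat (map fst (take (Suc j) segs)) = (SA, SB, 0) # concat (replicate (Suc j) (Lsteps \<tau>))"
        unfolding tk up using mr by (simp add: g_def)
      have Sc: "kron SA SB \<in> carrier_mat NN NN" using S_unitary by (simp add: unitary_mat_def)
      have run: "run_steps Hb (concat (map fst (take (Suc j) segs))) (plc \<psi>)
          = ((\<lambda>v. Tm \<tau> *\<^sub>v v) ^^ Suc j) (Emb *\<^sub>v \<psi>)"
      proof -
        have "run_steps Hb (concat (map fst (take (Suc j) segs))) (plc \<psi>)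
            = run_steps Hb (concat (replicate (Suc j) (Lsteps \<tau>))) (evol Hb 0 *\<^sub>v (kron SA SB *\<^sub>v plc \<psi>))"
          unfolding cc by (simp add: run_steps_def)
        also have "evol Hb 0 *\<^sub>v (kron SA SB *\<^sub>v plc \<psi>) = Emb *\<^sub>v \<psi>"
          using evol_zero[OF Hb_carrier] S_plc[OF pc] Emb_carrier pc by simp
        also have "run_steps Hb (concat (replicate (Suc j) (Lsteps \<tau>))) (Emb *\<^sub>v \<psi>) = ((\<lambda>v. Tm \<tau> *\<^sub>v v) ^^ Suc j) (Emb *\<^sub>v \<psi>)"
          by (rule run_rep) (use Emb_carrier pc in auto)
        finally show ?thesis .
      qed
      define X where "X = ((\<lambda>v. Tm \<tau> *\<^sub>v v) ^^ Suc j) (Emb *\<^sub>v \<psi>)"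
      define Y where "Y = Emb *\<^sub>v (((\<lambda>v. evol Hp \<tau> *\<^sub>v v) ^^ Suc j) \<psi>)"
      have tc: "\<And>w. w \<in> carrier_vec NN \<Longrightarrow> Tm \<tau> *\<^sub>v w \<in> carrier_vec NN"
        by (rule mult_mat_vec_carrier[OF Tm_carrier])
      have ec: "\<And>w. w \<in> carrier_vec dd \<Longrightarrow> evol Hp \<tau> *\<^sub>v w \<in> carrier_vec dd"
        by (rule mult_mat_vec_carrier[OF evol_carrier[OF Hp_carrier]])
      have e0: "Emb *\<^sub>v \<psi> \<in> carrier_vec NN" by (rule mult_mat_vec_carrier[OF Emb_carrier pc])
      have Xc: "X \<in> carrier_vec NN" unfolding X_def
        by (induction j) (simp_all add: tc e0)
      have Ec: "((\<lambda>v. evol Hp \<tau> *\<^sub>v v) ^^ Suc j) \<psi> \<in> carrier_vec dd"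
        by (induction j) (simp_all add: ec pc)
      have Yc: "Y \<in> carrier_vec NN" unfolding Y_def using Emb_carrier Ec by auto
      have pl: "place dA dA' 1 dB dB' 1 (evol Hp (snd (snd (segs ! j))) *\<^sub>v \<psi>) (ket0 (dA * 1 * dB * 1)) = kron SA SB *\<^sub>v Y"
      proof -
        have "evol Hp (snd (snd (segs ! j))) *\<^sub>v \<psi> = ((\<lambda>v. evol Hp \<tau> *\<^sub>v v) ^^ Suc j) \<psi>"
          unfolding sj g_def using evol_pow[OF pc, where t=\<tau> and k="Suc j"] by simp
        then show ?thesis unfolding Y_def using plc_S[OF Ec] by simp
      qed
      have tel: "vnorm (X - Y) \<le> real (Suc j) * (C' * \<tau>\<^sup>2) * vnorm \<psi>"
        unfolding X_def Y_def
      proof (rule telescope[OF Tm_carrier _ evol_carrier[OF Hp_carrier] _ Emb_carrier _ pc])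
        show "\<And>v. v \<in> carrier_vec NN \<Longrightarrow> vnorm (Tm \<tau> *\<^sub>v v) = vnorm v"
          by (rule unitary_vnorm[OF Tm_unitary])
        show "\<And>v. v \<in> carrier_vec dd \<Longrightarrow> vnorm (evol Hp \<tau> *\<^sub>v v) = vnorm v"
          by (rule unitary_vnorm[OF evol_unitary[OF Hp_herm]])
        fix \<phi> :: "complex vec" assume ph: "\<phi> \<in> carrier_vec dd"
        have "vnorm (Tm \<tau> *\<^sub>v (Emb *\<^sub>v \<phi>) - Emb *\<^sub>v (evol Hp \<tau> *\<^sub>v \<phi>)) \<le> C * \<tau>\<^sup>2 * vnorm \<phi>"
          using C[OF tau_pos tau1] ph by blast
        also have "\<dots> \<le> C' * \<tau>\<^sup>2 * vnorm \<phi>"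
          by (intro mult_right_mono vnorm_nonneg) (auto simp: C'_def)
        finally show "vnorm (Tm \<tau> *\<^sub>v (Emb *\<^sub>v \<phi>) - Emb *\<^sub>v (evol Hp \<tau> *\<^sub>v \<phi>)) \<le> C' * \<tau>\<^sup>2 * vnorm \<phi>" .
      qed
      have fin: "real (Suc j) * (C' * \<tau>\<^sup>2) \<le> \<epsilon>"
      proof -
        have "real (Suc j) * (C' * \<tau>\<^sup>2) \<le> real n * (C' * \<tau>\<^sup>2)"
          using jn C'0 by (intro mult_right_mono) auto
        then show ?thesis using errb by linarith
      qed
      show "\<exists>\<phi>. dim_vec \<phi> = dA * 1 * dB * 1 \<and>
               vnorm (kron (fst (fst (snd (segs ! j)))) (snd (fst (snd (segs ! j))))
                        *\<^sub>v run_steps (ext_ham dA dA' 1 dB dB' 1 Hs)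
                               (concat (map fst (take (Suc j) segs)))
                               (place dA dA' 1 dB dB' 1 \<psi> (ket0 (dA * 1 * dB * 1)))
                      - place dA dA' 1 dB dB' 1 (evol Hp (snd (snd (segs ! j))) *\<^sub>v \<psi>) \<phi>)
               \<le> \<epsilon>"
      proof (intro exI conjI)
        show "dim_vec (ket0 (dA * 1 * dB * 1)) = dA * 1 * dB * 1" by (simp add: ket0_def)
        have k: "kron (fst (fst (snd (segs ! j)))) (snd (fst (snd (segs ! j)))) = kron SA SB"
          by (simp add: sj g_def)
        have "vnorm (kron SA SB *\<^sub>v X - kron SA SB *\<^sub>v Y) = vnorm (kron SA SB *\<^sub>v (X - Y))"
          by (simp only: mult_minus_distrib_mat_vec[OF Sc Xc Yc])
        also have "\<dots> = vnorm (X - Y)" by (rule unitary_vnorm[OF S_unitary]) (use Xc Yc in auto)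
        also have "\<dots> \<le> real (Suc j) * (C' * \<tau>\<^sup>2) * vnorm \<psi>" by (rule tel)
        also have "\<dots> \<le> \<epsilon>" using psi fin by simp
        finally have "vnorm (kron SA SB *\<^sub>v X - kron SA SB *\<^sub>v Y) \<le> \<epsilon>" .
        then show "vnorm (kron (fst (fst (snd (segs ! j)))) (snd (fst (snd (segs ! j))))
                        *\<^sub>v run_steps (ext_ham dA dA' 1 dB dB' 1 Hs)
                               (concat (map fst (take (Suc j) segs)))
                               (place dA dA' 1 dB dB' 1 \<psi> (ket0 (dA * 1 * dB * 1)))
                      - place dA dA' 1 dB dB' 1 (evol Hp (snd (snd (segs ! j))) *\<^sub>v \<psi>) (ket0 (dA * 1 * dB * 1))) \<le> \<epsilon>"
          unfolding k pl Hb_def[symmetric] run X_def by simp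
      qed
    qed
    show "\<exists>nA nB. \<exists>segs :: ((complex mat \<times> complex mat \<times> real) list \<times> (complex mat \<times> complex mat) \<times> real) list.
        nA \<ge> 1 \<and> nB \<ge> 1 \<and> segs \<noteq> [] \<and>
        (\<forall>seg\<in>set segs. (\<forall>(UA, UB, tau)\<in>set (fst seg).
              unitary_mat (wsA dA dA' nA) UA \<and> unitary_mat (wsA dB dB' nB) UB \<and> tau \<ge> 0) \<and>
           unitary_mat (wsA dA dA' nA) (fst (fst (snd seg))) \<and>
           unitary_mat (wsA dB dB' nB) (snd (fst (snd seg)))) \<and>
        (\<forall>j<length segs. 0 < snd (snd (segs ! j)) \<and>
            (j = 0 \<longrightarrow> snd (snd (segs ! j)) \<le> \<delta>) \<and>
            (j > 0 \<longrightarrow> snd (snd (segs ! (j - 1))) < snd (snd (segs ! j)) \<and>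
                       snd (snd (segs ! j)) - snd (snd (segs ! (j - 1))) \<le> \<delta>)) \<and>
        snd (snd (last segs)) = t \<and>
        (\<Sum>seg\<leftarrow>segs. \<Sum>(UA, UB, tau)\<leftarrow>fst seg. tau) = t / 1 \<and>
        (\<forall>\<psi>. dim_vec \<psi> = dA' * dB' \<and> vnorm \<psi> = 1 \<longrightarrow>
          (\<forall>j<length segs.
             \<exists>\<phi>. dim_vec \<phi> = dA * nA * dB * nB \<and>
               vnorm (kron (fst (fst (snd (segs ! j)))) (snd (fst (snd (segs ! j))))
                        *\<^sub>v run_steps (ext_ham dA dA' nA dB dB' nB Hs)
                               (concat (map fst (take (Suc j) segs)))
                               (place dA dA' nA dB dB' nB \<psi> (ket0 (dA * nA * dB * nB)))
                      - place dA dA' nA dB dB' nB (evol Hp (snd (snd (segs ! j))) *\<^sub>v \<psi>) \<phi>)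
               \<le> \<epsilon>))"
      by (rule exI[of _ 1], rule exI[of _ 1], rule exI[of _ segs]) (intro conjI order_refl f0 f1 f2 f3 f4 f5)
  qed
qed

end

theorem mainTheorem2:
  fixes dA dB dA' dB' :: nat and Ts :: "(complex mat \<times> complex mat) list"
  assumes "1 \<le> dA'" "dA' \<le> dA" "1 \<le> dB'" "dB' \<le> dB"
    and "\<forall>(J, K)\<in>set Ts. J \<in> carrier_mat dA dA \<and> K \<in> carrier_mat dB dB"
    and "hermitian_mat (dA * dB) (msum (dA * dB) (map (\<lambda>(J, K). kron J K) Ts))"
  shows "sim_rate dA dB (msum (dA * dB) (map (\<lambda>(J, K). kron J K) Ts))
                  dA' dB' (msum (dA' * dB') (map (\<lambda>(J, K). kron (compress dA' J) (compress dB' K)) Ts))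
         \<ge> 1"
proof -
  interpret qsim2 dA dB dA' dB' Ts
    using assms by (unfold_locales) auto
  have "achieves dA dB (msum (dA * dB) (map (\<lambda>(J, K). kron J K) Ts))
                  dA' dB' (msum (dA' * dB') (map (\<lambda>(J, K). kron (compress dA' J) (compress dB' K)) Ts)) 1"
    using achieves_1 by (simp only: Hs_def Hp_def)
  then have "ereal 1 \<in> ereal ` {\<gamma>. achieves dA dB (msum (dA * dB) (map (\<lambda>(J, K). kron J K) Ts))
                  dA' dB' (msum (dA' * dB') (map (\<lambda>(J, K). kron (compress dA' J) (compress dB' K)) Ts)) \<gamma>}"
    by blast
  then show ?thesis unfolding sim_rate_def by (metis Sup_upper one_ereal_def)
qed


end
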